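(* Let $R$ be a ring and $n\geq 1$. Then $R$ is isomorphic to a direct product of $n$ left localization maximal rings if and only if the following conditions hold: (1) $\max\mathrm{Den}_l(R)=\{S_1,\ldots,S_n\}$ (with the $S_i$ distinct); (2) $\mathfrak{l}_R=0$; (3) $\mathrm{ass}(S_i)+\mathrm{ass}(S_j)=R$ for all $i\neq j$; (4) the factor rings $R/\mathrm{ass}(S_i)$, $i=1,\ldots,n$, are left localization maximal rings. Moreover, in this case: (a) for each $i$, the ring $R_i:=S_i^{-1}R$ is a left localization maximal ring, the homomorphism $\sigma_i:R\to R_i$, $r\mapsto\frac{r}{1}$, is surjective with $\ker(\sigma_i)=\mathrm{ass}(S_i)$, so $R_i\cong R/\mathrm{ass}(S_i)$; (b) the map $\sigma:=\prod_{i=1}^n\sigma_i:R\to\prod_{i=1}^nR_i$ is an isomorphism; (c) identifying $R$ with $\prod_{i=1}^nR_i$ via $\sigma$, one has $S_i=R_1\times\cdots\times R_i^*\times\cdots\times R_n=\sigma_i^{-1}(R_i^* )$, where $R_i^*$ is the group of units of $R_i\cong R/\mathrm{ass}(S_i)$, and $R_i^*=\sigma_i(S_i)$ for each $i$; (d) $\mathrm{ass}(S_i)=R_1\times\cdots\times 0\times\cdots\times R_n$ (with $0$ in the $i$-th place) for each $i$.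
   Context: All rings are associative with $1$. A multiplicative subset $S$ of $R$ ($1\in S$, $0\notin S$, closed under multiplication) is a left Ore set if $Sr\cap Rs\neq\emptyset$ for all $r\in R$, $s\in S$; for it, $\mathrm{ass}(S):=\{r\in R: sr=0\text{ for some } s\in S\}$. A left Ore set $S$ is a left denominator set if $rs=0$ ($r\in R$, $s\in S$) implies $tr=0$ for some $t\in S$. $\mathrm{Den}_l(R)$ is the set of left denominator sets, $S^{-1}R$ the left localization, $\max\mathrm{Den}_l(R)$ the set of maximal elements of $(\mathrm{Den}_l(R),\subseteq)$, and $\mathfrak{l}_R:=\bigcap_{S\in\max\mathrm{Den}_l(R)}\mathrm{ass}(S)$ the left localization radical. For a ring $A$, $S_0(A)$ is the largest left Ore set of $A$ consisting of regular elements (it exists and is a left denominator set) and $Q_l(A):=S_0(A)^{-1}A$. A ring $A$ is a left localization maximal ring if $A=Q_l(A)$ (i.e. $S_0(A)$ consists of units of $A$) and $\{\mathrm{ass}(S): S\in\mathrm{Den}_l(A)\}=\{0\}$. *)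

theory Defs
  imports "HOL-Algebra.Algebra"
begin

definition mult_subset :: "('a,'m) ring_scheme \<Rightarrow> 'a set \<Rightarrow> bool" where
  "mult_subset R S \<longleftrightarrow> S \<subseteq> carrier R \<and> \<one>\<^bsub>R\<^esub> \<in> S \<and> \<zero>\<^bsub>R\<^esub> \<notin> S \<and>
     (\<forall>s\<in>S. \<forall>t\<in>S. s \<otimes>\<^bsub>R\<^esub> t \<in> S)"

definition left_ore :: "('a,'m) ring_scheme \<Rightarrow> 'a set \<Rightarrow> bool" where
  "left_ore R S \<longleftrightarrow> mult_subset R S \<and>
     (\<forall>r\<in>carrier R. \<forall>s\<in>S. \<exists>s'\<in>S. \<exists>r'\<in>carrier R. s' \<otimes>\<^bsub>R\<^esub> r = r' \<otimes>\<^bsub>R\<^esub> s)"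

definition ass :: "('a,'m) ring_scheme \<Rightarrow> 'a set \<Rightarrow> 'a set" where
  "ass R S = {r \<in> carrier R. \<exists>s\<in>S. s \<otimes>\<^bsub>R\<^esub> r = \<zero>\<^bsub>R\<^esub>}"

definition left_den :: "('a,'m) ring_scheme \<Rightarrow> 'a set \<Rightarrow> bool" where
  "left_den R S \<longleftrightarrow> left_ore R S \<and>
     (\<forall>r\<in>carrier R. \<forall>s\<in>S. r \<otimes>\<^bsub>R\<^esub> s = \<zero>\<^bsub>R\<^esub> \<longrightarrow> (\<exists>t\<in>S. t \<otimes>\<^bsub>R\<^esub> r = \<zero>\<^bsub>R\<^esub>))"

definition Den_l :: "('a,'m) ring_scheme \<Rightarrow> 'a set set" where
  "Den_l R = {S. left_den R S}"

definition maxDen_l :: "('a,'m) ring_scheme \<Rightarrow> 'a set set" where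
  "maxDen_l R = {S \<in> Den_l R. \<forall>T\<in>Den_l R. S \<subseteq> T \<longrightarrow> T = S}"

definition loc_radical :: "('a,'m) ring_scheme \<Rightarrow> 'a set" where
  "loc_radical R = carrier R \<inter> \<Inter> (ass R ` maxDen_l R)"

definition regular :: "('a,'m) ring_scheme \<Rightarrow> 'a \<Rightarrow> bool" where
  "regular R x \<longleftrightarrow> x \<in> carrier R \<and>
     (\<forall>y\<in>carrier R. (x \<otimes>\<^bsub>R\<^esub> y = \<zero>\<^bsub>R\<^esub> \<longrightarrow> y = \<zero>\<^bsub>R\<^esub>) \<and>
                     (y \<otimes>\<^bsub>R\<^esub> x = \<zero>\<^bsub>R\<^esub> \<longrightarrow> y = \<zero>\<^bsub>R\<^esub>))"

text \<open>S_0(A): the largest left Ore set consisting of regular elements, i.e. the union of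
  all such sets (the paper states that this union is itself such a set).\<close>
definition S0 :: "('a,'m) ring_scheme \<Rightarrow> 'a set" where
  "S0 A = \<Union> {S. left_ore A S \<and> S \<subseteq> {x. regular A x}}"

text \<open>Left localization maximal ring: A = Q_l(A) (S_0(A) consists of units)
  and ass(S) = 0 for every left denominator set S.\<close>
definition left_loc_maximal :: "('a,'m) ring_scheme \<Rightarrow> bool" where
  "left_loc_maximal A \<longleftrightarrow> ring A \<and> S0 A \<subseteq> Units A \<and>
     ass A ` Den_l A = {{\<zero>\<^bsub>A\<^esub>}}"

text \<open>This determines S^{-1}R
  (with r \<mapsto> r/1) uniquely up to a unique isomorphism.\<close>
definition is_left_localization ::
  "('a,'m) ring_scheme \<Rightarrow> 'a set \<Rightarrow> ('c,'n) ring_scheme \<Rightarrow> ('a \<Rightarrow> 'c) \<Rightarrow> bool" where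
  "is_left_localization R S Q \<sigma> \<longleftrightarrow> ring Q \<and> \<sigma> \<in> ring_hom R Q \<and>
     \<sigma> ` S \<subseteq> Units Q \<and>
     (\<forall>q\<in>carrier Q. \<exists>s\<in>S. \<exists>r\<in>carrier R. q = inv\<^bsub>Q\<^esub> (\<sigma> s) \<otimes>\<^bsub>Q\<^esub> \<sigma> r) \<and>
     {r \<in> carrier R. \<sigma> r = \<zero>\<^bsub>Q\<^esub>} = ass R S"

definition prod_ring :: "nat \<Rightarrow> (nat \<Rightarrow> ('b,'n) ring_scheme) \<Rightarrow> (nat \<Rightarrow> 'b) ring" where
  "prod_ring n A = \<lparr> carrier = (\<Pi>\<^sub>E i\<in>{..<n}. carrier (A i)),
     monoid.mult = (\<lambda>f g. \<lambda>i\<in>{..<n}. f i \<otimes>\<^bsub>A i\<^esub> g i),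
     one = (\<lambda>i\<in>{..<n}. \<one>\<^bsub>A i\<^esub>),
     ring.zero = (\<lambda>i\<in>{..<n}. \<zero>\<^bsub>A i\<^esub>),
     add = (\<lambda>f g. \<lambda>i\<in>{..<n}. f i \<oplus>\<^bsub>A i\<^esub> g i) \<rparr>"

definition conds :: "('a,'m) ring_scheme \<Rightarrow> nat \<Rightarrow> (nat \<Rightarrow> 'a set) \<Rightarrow> bool" where
  "conds R n S \<longleftrightarrow>
     inj_on S {..<n} \<and> maxDen_l R = S ` {..<n} \<and>
     loc_radical R = {\<zero>\<^bsub>R\<^esub>} \<and>
     (\<forall>i<n. \<forall>j<n. i \<noteq> j \<longrightarrow> ass R (S i) <+>\<^bsub>R\<^esub> ass R (S j) = carrier R) \<and>
     (\<forall>i<n. left_loc_maximal (R Quot ass R (S i)))"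

end

theory Submission
  imports Defs
begin


lemma ass_subset: "ass R S \<subseteq> carrier R"
  unfolding ass_def by auto

lemma ass_ideal:
  fixes R (structure)
  assumes R: "ring R" and S: "left_ore R S"
  shows "ideal (ass R S) R"
proof -
  interpret ring R by fact
  have SR: "S \<subseteq> carrier R" "\<one> \<in> S" "\<zero> \<notin> S" "\<And>s t. s \<in> S \<Longrightarrow> t \<in> S \<Longrightarrow> s \<otimes> t \<in> S"
    using S unfolding left_ore_def mult_subset_def by auto
  have ore: "\<And>r s. r \<in> carrier R \<Longrightarrow> s \<in> S \<Longrightarrow> \<exists>s'\<in>S. \<exists>r'\<in>carrier R. s' \<otimes> r = r' \<otimes> s"
    using S unfolding left_ore_def by auto
  show ?thesis
  proof (rule idealI[OF R])
    show "subgroup (ass R S) (add_monoid R)"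
    proof
      show "ass R S \<subseteq> carrier (add_monoid R)" using ass_subset by simp
      show "\<one>\<^bsub>add_monoid R\<^esub> \<in> ass R S" using SR unfolding ass_def by force
    next
      fix x y assume x: "x \<in> ass R S" and y: "y \<in> ass R S"
      then obtain s1 s2 where s1: "s1 \<in> S" "s1 \<otimes> x = \<zero>" and s2: "s2 \<in> S" "s2 \<otimes> y = \<zero>"
        and xc: "x \<in> carrier R" and yc: "y \<in> carrier R" unfolding ass_def by auto
      have s1c: "s1 \<in> carrier R" and s2c: "s2 \<in> carrier R" using s1 s2 SR by auto
      obtain s' r' where s': "s' \<in> S" "r' \<in> carrier R" "s' \<otimes> s1 = r' \<otimes> s2"
        using ore[OF s1c s2(1)] by blast
      have s'c: "s' \<in> carrier R" using s' SR by auto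
      have "(s' \<otimes> s1) \<otimes> (x \<oplus> y) = (s' \<otimes> s1) \<otimes> x \<oplus> (s' \<otimes> s1) \<otimes> y"
        using s'c s1c xc yc by (simp add: r_distr)
      also have "\<dots> = s' \<otimes> (s1 \<otimes> x) \<oplus> (r' \<otimes> s2) \<otimes> y"
        unfolding s'(3)[symmetric] using s'c s1c xc yc by (simp add: m_assoc)
      also have "\<dots> = \<zero>" using s1 s2 s'(2) s'c s2c yc by (simp add: m_assoc)
      finally show "x \<otimes>\<^bsub>add_monoid R\<^esub> y \<in> ass R S"
        unfolding ass_def using SR(4)[OF s'(1) s1(1)] xc yc by auto
    next
      fix x assume x: "x \<in> ass R S"
      then obtain s where s: "s \<in> S" "s \<otimes> x = \<zero>" and xc: "x \<in> carrier R" unfolding ass_def by auto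
      have sc: "s \<in> carrier R" using s SR by auto
      have "s \<otimes> (\<ominus> x) = \<zero>" using s sc xc by (simp add: r_minus)
      then show "inv\<^bsub>add_monoid R\<^esub> x \<in> ass R S"
        unfolding ass_def using s xc by (auto simp: a_inv_def[symmetric])
    qed
  next
    fix a x assume a: "a \<in> ass R S" and x: "x \<in> carrier R"
    then obtain s where s: "s \<in> S" "s \<otimes> a = \<zero>" and ac: "a \<in> carrier R" unfolding ass_def by auto
    have sc: "s \<in> carrier R" using s SR by auto
    obtain s' r' where s': "s' \<in> S" "r' \<in> carrier R" "s' \<otimes> x = r' \<otimes> s"
      using ore[OF x s(1)] by blast
    have "s' \<otimes> (x \<otimes> a) = \<zero>"
      using s' s sc ac x SR by (metis m_assoc r_null subsetD)
    then show "x \<otimes> a \<in> ass R S" unfolding ass_def using s' ac x by auto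
  next
    fix a x assume a: "a \<in> ass R S" and x: "x \<in> carrier R"
    then obtain s where s: "s \<in> S" "s \<otimes> a = \<zero>" and ac: "a \<in> carrier R" unfolding ass_def by auto
    have sc: "s \<in> carrier R" using s SR by auto
    have "s \<otimes> (a \<otimes> x) = \<zero>" using s sc ac x by (metis m_assoc l_null)
    then show "a \<otimes> x \<in> ass R S" unfolding ass_def using s ac x by auto
  qed
qed




locale riso = ring_hom_ring P Q f for P (structure) and Q (structure) and f +
  assumes bij: "bij_betw f (carrier P) (carrier Q)"
begin

lemma surj: "y \<in> carrier Q \<Longrightarrow> \<exists>x\<in>carrier P. f x = y"
  using bij by (metis bij_betw_def image_iff)

lemma injE: "x \<in> carrier P \<Longrightarrow> x' \<in> carrier P \<Longrightarrow> f x = f x' \<Longrightarrow> x = x'"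
  using bij unfolding bij_betw_def inj_on_def by auto

lemma mcP: "a \<in> carrier P \<Longrightarrow> b \<in> carrier P \<Longrightarrow> a \<otimes> b \<in> carrier P"
  by simp

lemma zero_iff: "x \<in> carrier P \<Longrightarrow> f x = \<zero>\<^bsub>Q\<^esub> \<longleftrightarrow> x = \<zero>"
  using injE[of x \<zero>] by auto

lemma mult_subset_push: "mult_subset P S \<Longrightarrow> mult_subset Q (f ` S)"
  unfolding mult_subset_def
proof (elim conjE, intro conjI)
  assume S: "S \<subseteq> carrier P" "\<one> \<in> S" "\<zero> \<notin> S" "\<forall>s\<in>S. \<forall>t\<in>S. s \<otimes> t \<in> S"
  show "f ` S \<subseteq> carrier Q" using S by auto
  show "\<one>\<^bsub>Q\<^esub> \<in> f ` S" using S by (metis hom_one image_eqI)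
  show "\<zero>\<^bsub>Q\<^esub> \<notin> f ` S"
  proof
    assume "\<zero>\<^bsub>Q\<^esub> \<in> f ` S"
    then obtain x where x: "x \<in> S" "f x = \<zero>\<^bsub>Q\<^esub>" by auto
    then have "x = \<zero>" using zero_iff[of x] S by auto
    then show False using x S by auto
  qed
  show "\<forall>s\<in>f ` S. \<forall>t\<in>f ` S. s \<otimes>\<^bsub>Q\<^esub> t \<in> f ` S"
  proof (intro ballI)
    fix a b assume "a \<in> f ` S" "b \<in> f ` S"
    then obtain s t where st: "s \<in> S" "t \<in> S" "a = f s" "b = f t" by auto
    then have "a \<otimes>\<^bsub>Q\<^esub> b = f (s \<otimes> t)" using S by (metis hom_mult subsetD)
    then show "a \<otimes>\<^bsub>Q\<^esub> b \<in> f ` S" using st S by auto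
  qed
qed

lemma left_ore_push: "left_ore P S \<Longrightarrow> left_ore Q (f ` S)"
  unfolding left_ore_def
proof (elim conjE, intro conjI ballI)
  assume S: "mult_subset P S" and ore: "\<forall>r\<in>carrier P. \<forall>s\<in>S. \<exists>s'\<in>S. \<exists>r'\<in>carrier P. s' \<otimes> r = r' \<otimes> s"
  show "mult_subset Q (f ` S)" using mult_subset_push S .
  have SC: "S \<subseteq> carrier P" using S unfolding mult_subset_def by auto
  fix y t assume y: "y \<in> carrier Q" and t: "t \<in> f ` S"
  obtain r where r: "r \<in> carrier P" "f r = y" using surj y by blast
  obtain s where s: "s \<in> S" "t = f s" using t by auto
  obtain s' r' where sr: "s' \<in> S" "r' \<in> carrier P" "s' \<otimes> r = r' \<otimes> s" using ore r s by blast
  have "f s' \<otimes>\<^bsub>Q\<^esub> y = f r' \<otimes>\<^bsub>Q\<^esub> t"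
    using sr r s SC by (metis hom_mult subsetD)
  moreover have "f s' \<in> f ` S" "f r' \<in> carrier Q" using sr by auto
  ultimately show "\<exists>s'\<in>f ` S. \<exists>r'\<in>carrier Q. s' \<otimes>\<^bsub>Q\<^esub> y = r' \<otimes>\<^bsub>Q\<^esub> t"
    by blast
qed

lemma left_den_push: "left_den P S \<Longrightarrow> left_den Q (f ` S)"
  unfolding left_den_def
proof (elim conjE, intro conjI ballI impI)
  assume S: "left_ore P S" and den: "\<forall>r\<in>carrier P. \<forall>s\<in>S. r \<otimes> s = \<zero> \<longrightarrow> (\<exists>t\<in>S. t \<otimes> r = \<zero>)"
  show "left_ore Q (f ` S)" using left_ore_push S .
  have SC: "S \<subseteq> carrier P" using S unfolding left_ore_def mult_subset_def by auto
  fix y t assume y: "y \<in> carrier Q" and t: "t \<in> f ` S" and z: "y \<otimes>\<^bsub>Q\<^esub> t = \<zero>\<^bsub>Q\<^esub>"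
  obtain r where r: "r \<in> carrier P" "f r = y" using surj y by blast
  obtain s where s: "s \<in> S" "t = f s" using t by auto
  have "f (r \<otimes> s) = \<zero>\<^bsub>Q\<^esub>" using z r s SC by auto
  moreover have "s \<in> carrier P" using s SC by auto
  ultimately have "r \<otimes> s = \<zero>" using zero_iff[OF mcP[OF r(1)]] by blast
  then obtain u where u: "u \<in> S" "u \<otimes> r = \<zero>" using den r s by blast
  have "f u \<otimes>\<^bsub>Q\<^esub> y = \<zero>\<^bsub>Q\<^esub>" using u r SC by (metis hom_mult hom_zero subsetD)
  then show "\<exists>t\<in>f ` S. t \<otimes>\<^bsub>Q\<^esub> y = \<zero>\<^bsub>Q\<^esub>" using u by blast
qed

lemma regular_push: "regular P x \<Longrightarrow> regular Q (f x)"
  unfolding regular_def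
proof (elim conjE, intro conjI ballI impI)
  assume x: "x \<in> carrier P" and reg: "\<forall>y\<in>carrier P. (x \<otimes> y = \<zero> \<longrightarrow> y = \<zero>) \<and> (y \<otimes> x = \<zero> \<longrightarrow> y = \<zero>)"
  show "f x \<in> carrier Q" using x by simp
  fix y assume y: "y \<in> carrier Q"
  obtain r where r: "r \<in> carrier P" "f r = y" using surj y by blast
  { assume "f x \<otimes>\<^bsub>Q\<^esub> y = \<zero>\<^bsub>Q\<^esub>"
    then have "f (x \<otimes> r) = \<zero>\<^bsub>Q\<^esub>" using r x by simp
    then have "x \<otimes> r = \<zero>" using zero_iff[OF mcP[OF x r(1)]] by blast
    then have "r = \<zero>" using reg r(1) by blast
    then show "y = \<zero>\<^bsub>Q\<^esub>" using r(2) by simp }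
  { assume "y \<otimes>\<^bsub>Q\<^esub> f x = \<zero>\<^bsub>Q\<^esub>"
    then have "f (r \<otimes> x) = \<zero>\<^bsub>Q\<^esub>" using r x by simp
    then have "r \<otimes> x = \<zero>" using zero_iff[OF mcP[OF r(1) x]] by blast
    then have "r = \<zero>" using reg r(1) by blast
    then show "y = \<zero>\<^bsub>Q\<^esub>" using r(2) by simp }
qed

lemma ass_push: assumes SC: "S \<subseteq> carrier P" shows "ass Q (f ` S) = f ` ass P S"
proof
  show "ass Q (f ` S) \<subseteq> f ` ass P S"
  proof
    fix y assume "y \<in> ass Q (f ` S)"
    then obtain s where y: "y \<in> carrier Q" and s: "s \<in> S" "f s \<otimes>\<^bsub>Q\<^esub> y = \<zero>\<^bsub>Q\<^esub>"
      unfolding ass_def by auto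
    obtain r where r: "r \<in> carrier P" "f r = y" using surj y by blast
    have "f (s \<otimes> r) = \<zero>\<^bsub>Q\<^esub>" using s r SC by auto
    moreover have "s \<in> carrier P" using s SC by auto
    ultimately have "s \<otimes> r = \<zero>" using zero_iff[OF mcP[OF _ r(1)]] by blast
    then show "y \<in> f ` ass P S" using r s unfolding ass_def by auto
  qed
  show "f ` ass P S \<subseteq> ass Q (f ` S)"
  proof
    fix y assume "y \<in> f ` ass P S"
    then obtain r s where r: "r \<in> carrier P" "y = f r" and s: "s \<in> S" "s \<otimes> r = \<zero>"
      unfolding ass_def by auto
    have "f s \<otimes>\<^bsub>Q\<^esub> y = \<zero>\<^bsub>Q\<^esub>" using r s SC by (metis hom_mult hom_zero subsetD)
    then show "y \<in> ass Q (f ` S)" using r s unfolding ass_def by auto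
  qed
qed

lemma Units_push: "Units Q = f ` Units P"
proof
  show "f ` Units P \<subseteq> Units Q"
  proof
    fix y assume "y \<in> f ` Units P"
    then obtain x z where x: "y = f x" "x \<in> carrier P" "z \<in> carrier P" "z \<otimes> x = \<one>" "x \<otimes> z = \<one>"
      unfolding Units_def by auto
    have "f z \<otimes>\<^bsub>Q\<^esub> y = \<one>\<^bsub>Q\<^esub>" "y \<otimes>\<^bsub>Q\<^esub> f z = \<one>\<^bsub>Q\<^esub>"
      using x by (metis hom_mult hom_one)+
    then show "y \<in> Units Q" unfolding Units_def using x by auto
  qed
  show "Units Q \<subseteq> f ` Units P"
  proof
    fix y assume "y \<in> Units Q"
    then obtain w where y: "y \<in> carrier Q" "w \<in> carrier Q" "w \<otimes>\<^bsub>Q\<^esub> y = \<one>\<^bsub>Q\<^esub>" "y \<otimes>\<^bsub>Q\<^esub> w = \<one>\<^bsub>Q\<^esub>"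
      unfolding Units_def by auto
    obtain x where x: "x \<in> carrier P" "f x = y" using surj y by blast
    obtain z where z: "z \<in> carrier P" "f z = w" using surj y by blast
    have "f (z \<otimes> x) = f \<one>" "f (x \<otimes> z) = f \<one>" using x z y by auto
    then have "z \<otimes> x = \<one>" "x \<otimes> z = \<one>" using injE x z by auto
    then show "y \<in> f ` Units P" using x z unfolding Units_def by auto
  qed
qed

end

lemma riso_intro:
  assumes "ring P" "ring Q" "f \<in> ring_iso P Q" shows "riso P Q f"
  using assms unfolding riso_def riso_axioms_def ring_iso_def ring_hom_ring_def ring_hom_ring_axioms_def
  by auto

lemma llm_iso:
  assumes A: "ring A" and B: "ring B" and h: "h \<in> ring_iso A B" and L: "left_loc_maximal A"
  shows "left_loc_maximal B"
proof -
  define g where "g = inv_into (carrier A) h"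
  have g: "g \<in> ring_iso B A" unfolding g_def using ring_iso_set_sym[OF A h] .
  interpret H: riso A B h using riso_intro[OF A B h] .
  interpret G: riso B A g using riso_intro[OF B A g] .
  have hg: "\<And>y. y \<in> carrier B \<Longrightarrow> h (g y) = y"
    unfolding g_def using h unfolding ring_iso_def bij_betw_def by (auto intro: f_inv_into_f)
  have gc: "\<And>y. y \<in> carrier B \<Longrightarrow> g y \<in> carrier A" by simp
  have LA: "S0 A \<subseteq> Units A" "ass A ` Den_l A = {{\<zero>\<^bsub>A\<^esub>}}"
    using L unfolding left_loc_maximal_def by auto
  have "S0 B \<subseteq> Units B"
  proof
    fix x assume "x \<in> S0 B"
    then obtain S where S: "left_ore B S" "S \<subseteq> {x. regular B x}" "x \<in> S" unfolding S0_def by auto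
    have "g ` S \<subseteq> S0 A"
      unfolding S0_def using G.left_ore_push[OF S(1)] G.regular_push S(2) by blast
    then have "g x \<in> Units A" using S LA by auto
    then have "h (g x) \<in> Units B" using H.Units_push by auto
    moreover have "x \<in> carrier B" using S unfolding regular_def by auto
    ultimately show "x \<in> Units B" using hg by auto
  qed
  moreover have "ass B ` Den_l B = {{\<zero>\<^bsub>B\<^esub>}}"
  proof -
    obtain D0 where D0: "D0 \<in> Den_l A" using LA(2) by auto
    have D0C: "D0 \<subseteq> carrier A" using D0 unfolding Den_l_def left_den_def left_ore_def mult_subset_def by auto
    have ne: "h ` D0 \<in> Den_l B" using H.left_den_push D0 unfolding Den_l_def by auto
    have all: "ass B D = {\<zero>\<^bsub>B\<^esub>}" if D: "D \<in> Den_l B" for D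
    proof -
      have DC: "D \<subseteq> carrier B" using D unfolding Den_l_def left_den_def left_ore_def mult_subset_def by auto
      have "g ` D \<in> Den_l A" using G.left_den_push D unfolding Den_l_def by auto
      then have "ass A (g ` D) = {\<zero>\<^bsub>A\<^esub>}" using LA(2) by auto
      then have e: "g ` ass B D = {\<zero>\<^bsub>A\<^esub>}" using G.ass_push[OF DC] by simp
      have "ass B D \<subseteq> {\<zero>\<^bsub>B\<^esub>}"
      proof
        fix y assume y: "y \<in> ass B D"
        then have yc: "y \<in> carrier B" using ass_subset[of B D] by blast
        have "g y = \<zero>\<^bsub>A\<^esub>" using e y by auto
        then show "y \<in> {\<zero>\<^bsub>B\<^esub>}" using G.zero_iff yc by auto
      qed
      moreover have "ass B D \<noteq> {}" using e by auto
      ultimately show ?thesis by auto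
    qed
    show ?thesis using ne all by auto
  qed
  ultimately show ?thesis unfolding left_loc_maximal_def using B by auto
qed




locale decomp = ring R for R (structure) +
  fixes n :: nat and B :: "nat \<Rightarrow> ('c,'k) ring_scheme" and \<phi> :: "nat \<Rightarrow> 'a \<Rightarrow> 'c"
  assumes Bring: "\<And>i. i < n \<Longrightarrow> ring (B i)"
    and hom: "\<And>i. i < n \<Longrightarrow> \<phi> i \<in> ring_hom R (B i)"
    and jsurj: "\<And>a. (\<And>i. i < n \<Longrightarrow> a i \<in> carrier (B i)) \<Longrightarrow> \<exists>r\<in>carrier R. \<forall>i<n. \<phi> i r = a i"
    and jinj: "\<And>r r'. r \<in> carrier R \<Longrightarrow> r' \<in> carrier R \<Longrightarrow> (\<And>i. i < n \<Longrightarrow> \<phi> i r = \<phi> i r') \<Longrightarrow> r = r'"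
begin

lemma ph: "i < n \<Longrightarrow> ring_hom_ring R (B i) (\<phi> i)"
  using hom Bring ring_axioms unfolding ring_hom_ring_def ring_hom_ring_axioms_def by auto

lemma phc[simp]: "i < n \<Longrightarrow> x \<in> carrier R \<Longrightarrow> \<phi> i x \<in> carrier (B i)"
  using ring_hom_closed[OF hom] by auto
lemma phm[simp]: "i < n \<Longrightarrow> x \<in> carrier R \<Longrightarrow> y \<in> carrier R \<Longrightarrow> \<phi> i (x \<otimes> y) = \<phi> i x \<otimes>\<^bsub>B i\<^esub> \<phi> i y"
  using ring_hom_mult[OF hom] by auto
lemma pha[simp]: "i < n \<Longrightarrow> x \<in> carrier R \<Longrightarrow> y \<in> carrier R \<Longrightarrow> \<phi> i (x \<oplus> y) = \<phi> i x \<oplus>\<^bsub>B i\<^esub> \<phi> i y"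
  using ring_hom_add[OF hom] by auto
lemma ph1[simp]: "i < n \<Longrightarrow> \<phi> i \<one> = \<one>\<^bsub>B i\<^esub>"
  using ring_hom_one[OF hom] by auto
lemma ph0[simp]: "i < n \<Longrightarrow> \<phi> i \<zero> = \<zero>\<^bsub>B i\<^esub>"
proof -
  assume i: "i < n"
  interpret ring_hom_ring R "B i" "\<phi> i" using ph[OF i] .
  show ?thesis by simp
qed
lemma phn[simp]: "i < n \<Longrightarrow> x \<in> carrier R \<Longrightarrow> \<phi> i (\<ominus> x) = \<ominus>\<^bsub>B i\<^esub> \<phi> i x"
proof -
  assume i: "i < n" "x \<in> carrier R"
  interpret ring_hom_ring R "B i" "\<phi> i" using ph[OF i(1)] .
  show ?thesis using i by simp
qed

lemma phsurj: "i < n \<Longrightarrow> \<phi> i ` carrier R = carrier (B i)"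
proof
  assume i: "i < n"
  show "\<phi> i ` carrier R \<subseteq> carrier (B i)" using i by auto
  show "carrier (B i) \<subseteq> \<phi> i ` carrier R"
  proof
    fix b assume b: "b \<in> carrier (B i)"
    have "\<exists>r\<in>carrier R. \<forall>k<n. \<phi> k r = (\<lambda>k. if k = i then b else \<zero>\<^bsub>B k\<^esub>) k"
      by (rule jsurj) (use b Bring ring.ring_simprules(2) in auto)
    then show "b \<in> \<phi> i ` carrier R" using i by force
  qed
qed

lemma e_ex: assumes j: "j < n"
  shows "\<exists>e\<in>carrier R. \<forall>i<n. \<phi> i e = (if i = j then \<one>\<^bsub>B i\<^esub> else \<zero>\<^bsub>B i\<^esub>)"
  by (rule jsurj) (use Bring ring.ring_simprules(2) ring.ring_simprules(6) in auto)

definition T :: "nat \<Rightarrow> 'a set" where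
  "T j = {r \<in> carrier R. \<phi> j r \<in> Units (B j)}"

lemma zero_not_unit: assumes "ring A" "\<one>\<^bsub>A\<^esub> \<noteq> \<zero>\<^bsub>A\<^esub>" shows "\<zero>\<^bsub>A\<^esub> \<notin> Units A"
proof
  interpret A: ring A by fact
  assume "\<zero>\<^bsub>A\<^esub> \<in> Units A"
  then obtain x where "x \<in> carrier A" "x \<otimes>\<^bsub>A\<^esub> \<zero>\<^bsub>A\<^esub> = \<one>\<^bsub>A\<^esub>" unfolding Units_def by auto
  then show False using assms(2) by simp
qed

lemma den_T: assumes j: "j < n" and nt: "\<one>\<^bsub>B j\<^esub> \<noteq> \<zero>\<^bsub>B j\<^esub>"
  shows "left_den R (T j)"
proof -
  interpret Bj: ring "B j" using Bring[OF j] .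
  obtain e where e: "e \<in> carrier R" "\<And>i. i < n \<Longrightarrow> \<phi> i e = (if i = j then \<one>\<^bsub>B i\<^esub> else \<zero>\<^bsub>B i\<^esub>)"
    using e_ex[OF j] by blast
  have TC: "T j \<subseteq> carrier R" unfolding T_def by auto
  have ms: "mult_subset R (T j)"
    unfolding mult_subset_def
  proof (intro conjI ballI)
    show "T j \<subseteq> carrier R" by fact
    show "\<one> \<in> T j" unfolding T_def using j by simp
    show "\<zero> \<notin> T j" unfolding T_def using j zero_not_unit[OF Bring[OF j] nt] by simp
    fix s t assume "s \<in> T j" "t \<in> T j"
    then show "s \<otimes> t \<in> T j" unfolding T_def using j by auto
  qed
  have ore: "\<exists>s'\<in>T j. \<exists>r'\<in>carrier R. s' \<otimes> r = r' \<otimes> t" if r: "r \<in> carrier R" and t: "t \<in> T j" for r t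
  proof -
    have tc: "t \<in> carrier R" and u: "\<phi> j t \<in> Units (B j)" using t unfolding T_def by auto
    have "\<exists>r'\<in>carrier R. \<forall>i<n. \<phi> i r' = (\<lambda>i. if i = j then \<phi> j r \<otimes>\<^bsub>B j\<^esub> inv\<^bsub>B j\<^esub> (\<phi> j t) else \<zero>\<^bsub>B i\<^esub>) i"
      by (rule jsurj) (use Bring ring.ring_simprules(2) j r u in auto)
    then obtain r' where r': "r' \<in> carrier R"
      "\<And>i. i < n \<Longrightarrow> \<phi> i r' = (if i = j then \<phi> j r \<otimes>\<^bsub>B j\<^esub> inv\<^bsub>B j\<^esub> (\<phi> j t) else \<zero>\<^bsub>B i\<^esub>)" by auto
    have "e \<otimes> r = r' \<otimes> t"
    proof (rule jinj)
      show "e \<otimes> r \<in> carrier R" "r' \<otimes> t \<in> carrier R" using e r r' tc by auto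
      fix i assume i: "i < n"
      interpret Bi: ring "B i" using Bring[OF i] .
      show "\<phi> i (e \<otimes> r) = \<phi> i (r' \<otimes> t)"
      proof (cases "i = j")
        case True
        then show ?thesis using i e r r' tc u j by (simp add: Bj.m_assoc)
      next
        case False
        then show ?thesis using i e r r' tc by simp
      qed
    qed
    moreover have "e \<in> T j" unfolding T_def using e j by simp
    ultimately show ?thesis using r' by blast
  qed
  have den: "\<exists>u\<in>T j. u \<otimes> r = \<zero>" if r: "r \<in> carrier R" and t: "t \<in> T j" and z: "r \<otimes> t = \<zero>" for r t
  proof -
    have tc: "t \<in> carrier R" and u: "\<phi> j t \<in> Units (B j)" using t unfolding T_def by auto
    have z': "\<phi> j r \<otimes>\<^bsub>B j\<^esub> \<phi> j t = \<zero>\<^bsub>B j\<^esub>" using z j r tc by (metis phm ph0)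
    have uc: "\<phi> j t \<in> carrier (B j)" "inv\<^bsub>B j\<^esub> (\<phi> j t) \<in> carrier (B j)" using u by auto
    have "\<phi> j r = \<phi> j r \<otimes>\<^bsub>B j\<^esub> (\<phi> j t \<otimes>\<^bsub>B j\<^esub> inv\<^bsub>B j\<^esub> (\<phi> j t))"
      using u j r by simp
    also have "\<dots> = (\<phi> j r \<otimes>\<^bsub>B j\<^esub> \<phi> j t) \<otimes>\<^bsub>B j\<^esub> inv\<^bsub>B j\<^esub> (\<phi> j t)"
      using uc j r by (simp add: Bj.m_assoc)
    also have "\<dots> = \<zero>\<^bsub>B j\<^esub>" using z' uc by simp
    finally have rz: "\<phi> j r = \<zero>\<^bsub>B j\<^esub>" .
    have "e \<otimes> r = \<zero>"
    proof (rule jinj)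
      show "e \<otimes> r \<in> carrier R" "\<zero> \<in> carrier R" using e r by auto
      fix i assume i: "i < n"
      interpret Bi: ring "B i" using Bring[OF i] .
      show "\<phi> i (e \<otimes> r) = \<phi> i \<zero>"
        using i e r rz by (cases "i = j") auto
    qed
    moreover have "e \<in> T j" unfolding T_def using e j by simp
    ultimately show ?thesis by blast
  qed
  show ?thesis unfolding left_den_def left_ore_def using ms ore den by blast
qed

lemma ass_T: assumes j: "j < n" shows "ass R (T j) = {r \<in> carrier R. \<phi> j r = \<zero>\<^bsub>B j\<^esub>}"
proof -
  interpret Bj: ring "B j" using Bring[OF j] .
  obtain e where e: "e \<in> carrier R" "\<And>i. i < n \<Longrightarrow> \<phi> i e = (if i = j then \<one>\<^bsub>B i\<^esub> else \<zero>\<^bsub>B i\<^esub>)"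
    using e_ex[OF j] by blast
  show ?thesis
  proof
    show "ass R (T j) \<subseteq> {r \<in> carrier R. \<phi> j r = \<zero>\<^bsub>B j\<^esub>}"
    proof
      fix r assume "r \<in> ass R (T j)"
      then obtain t where r: "r \<in> carrier R" and t: "t \<in> carrier R" "\<phi> j t \<in> Units (B j)" "t \<otimes> r = \<zero>"
        unfolding ass_def T_def by auto
      have "\<phi> j t \<otimes>\<^bsub>B j\<^esub> \<phi> j r = \<zero>\<^bsub>B j\<^esub>" using t r j by (metis phm ph0)
      then have "inv\<^bsub>B j\<^esub> (\<phi> j t) \<otimes>\<^bsub>B j\<^esub> (\<phi> j t \<otimes>\<^bsub>B j\<^esub> \<phi> j r) = \<zero>\<^bsub>B j\<^esub>"
        using t by simp
      then have "\<phi> j r = \<zero>\<^bsub>B j\<^esub>" using t r j by (simp add: Bj.m_assoc[symmetric])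
      then show "r \<in> {r \<in> carrier R. \<phi> j r = \<zero>\<^bsub>B j\<^esub>}" using r by auto
    qed
    show "{r \<in> carrier R. \<phi> j r = \<zero>\<^bsub>B j\<^esub>} \<subseteq> ass R (T j)"
    proof
      fix r assume r: "r \<in> {r \<in> carrier R. \<phi> j r = \<zero>\<^bsub>B j\<^esub>}"
      have "e \<otimes> r = \<zero>"
      proof (rule jinj)
        show "e \<otimes> r \<in> carrier R" "\<zero> \<in> carrier R" using e r by auto
        fix i assume i: "i < n"
        interpret Bi: ring "B i" using Bring[OF i] .
        show "\<phi> i (e \<otimes> r) = \<phi> i \<zero>"
          using i e r by (cases "i = j") auto
      qed
      moreover have "e \<in> T j" unfolding T_def using e j by simp
      ultimately show "r \<in> ass R (T j)" using r unfolding ass_def by blast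
    qed
  qed
qed

end




lemma llm_nontriv: "left_loc_maximal A \<Longrightarrow> \<one>\<^bsub>A\<^esub> \<noteq> \<zero>\<^bsub>A\<^esub>"
proof -
  assume L: "left_loc_maximal A"
  then have "ass A ` Den_l A \<noteq> {}" unfolding left_loc_maximal_def by auto
  then obtain D where "D \<in> Den_l A" by blast
  then have "\<one>\<^bsub>A\<^esub> \<in> D" "\<zero>\<^bsub>A\<^esub> \<notin> D"
    unfolding Den_l_def left_den_def left_ore_def mult_subset_def by auto
  then show ?thesis by force
qed

lemma llm_units:
  assumes L: "left_loc_maximal A" and D: "left_den A D"
  shows "D \<subseteq> Units A"
proof -
  have A: "ring A" using L unfolding left_loc_maximal_def by auto
  interpret A: ring A by fact
  have "ass A D \<in> ass A ` Den_l A" using D unfolding Den_l_def by auto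
  then have as: "ass A D = {\<zero>\<^bsub>A\<^esub>}" using L unfolding left_loc_maximal_def by auto
  have DC: "D \<subseteq> carrier A" and ore: "left_ore A D"
    using D unfolding left_den_def left_ore_def mult_subset_def by auto
  have reg: "regular A x" if x: "x \<in> D" for x
    unfolding regular_def
  proof (intro conjI ballI impI)
    show "x \<in> carrier A" using x DC by auto
    fix y assume y: "y \<in> carrier A"
    { assume "x \<otimes>\<^bsub>A\<^esub> y = \<zero>\<^bsub>A\<^esub>"
      then have "y \<in> ass A D" unfolding ass_def using x y by auto
      then show "y = \<zero>\<^bsub>A\<^esub>" using as by auto }
    { assume "y \<otimes>\<^bsub>A\<^esub> x = \<zero>\<^bsub>A\<^esub>"
      then obtain t where "t \<in> D" "t \<otimes>\<^bsub>A\<^esub> y = \<zero>\<^bsub>A\<^esub>" using D x y unfolding left_den_def by blast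
      then have "y \<in> ass A D" unfolding ass_def using y by auto
      then show "y = \<zero>\<^bsub>A\<^esub>" using as by auto }
  qed
  have "D \<subseteq> S0 A" unfolding S0_def using ore reg by auto
  then show ?thesis using L unfolding left_loc_maximal_def by auto
qed

context decomp begin
lemma Brnull: "i < n \<Longrightarrow> x \<in> carrier (B i) \<Longrightarrow> x \<otimes>\<^bsub>B i\<^esub> \<zero>\<^bsub>B i\<^esub> = \<zero>\<^bsub>B i\<^esub>"
proof -
  assume i: "i < n" and x: "x \<in> carrier (B i)"
  interpret Bi: ring "B i" using Bring[OF i] .
  show ?thesis using x by simp
qed
lemma Blnull: "i < n \<Longrightarrow> x \<in> carrier (B i) \<Longrightarrow> \<zero>\<^bsub>B i\<^esub> \<otimes>\<^bsub>B i\<^esub> x = \<zero>\<^bsub>B i\<^esub>"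
proof -
  assume i: "i < n" and x: "x \<in> carrier (B i)"
  interpret Bi: ring "B i" using Bring[OF i] .
  show ?thesis using x by simp
qed
lemma prod_zero:
  assumes z: "\<And>j. j < n \<Longrightarrow> \<exists>s\<in>S. \<phi> j s = \<zero>\<^bsub>B j\<^esub>"
    and SC: "S \<subseteq> carrier R" and one: "\<one> \<in> S" and cl: "\<And>s t. s \<in> S \<Longrightarrow> t \<in> S \<Longrightarrow> s \<otimes> t \<in> S"
  shows "m \<le> n \<Longrightarrow> \<exists>s\<in>S. \<forall>i<m. \<phi> i s = \<zero>\<^bsub>B i\<^esub>"
proof (induction m)
  case 0 then show ?case using one by blast
next
  case (Suc m)
  have mn: "m < n" "m \<le> n" using Suc.prems by auto
  obtain s where s: "s \<in> S" "\<And>i. i < m \<Longrightarrow> \<phi> i s = \<zero>\<^bsub>B i\<^esub>" using Suc.IH mn(2) by blast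
  obtain s' where s': "s' \<in> S" "\<phi> m s' = \<zero>\<^bsub>B m\<^esub>" using z[OF mn(1)] by blast
  have sc: "s \<in> carrier R" "s' \<in> carrier R" using s(1) s'(1) SC by blast+
  have "\<phi> i (s \<otimes> s') = \<zero>\<^bsub>B i\<^esub>" if i: "i < Suc m" for i
  proof -
    have iN: "i < n" using i mn by linarith
    have phs: "\<phi> i (s \<otimes> s') = \<phi> i s \<otimes>\<^bsub>B i\<^esub> \<phi> i s'" using phm[OF iN sc] .
    have cs: "\<phi> i s \<in> carrier (B i)" "\<phi> i s' \<in> carrier (B i)" using phc[OF iN sc(1)] phc[OF iN sc(2)] .
    show ?thesis
    proof (cases "i = m")
      case True then show ?thesis using s'(2) phs cs Brnull[OF iN] by metis
    next
      case False then have "i < m" using i by linarith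
      then show ?thesis using s(2) phs cs Blnull[OF iN] by metis
    qed
  qed
  then show ?case using cl[OF s(1) s'(1)] by blast
qed

lemma den_sub_j:
  assumes j: "j < n" and L: "left_loc_maximal (B j)" and D: "left_den R S" and nz: "\<zero>\<^bsub>B j\<^esub> \<notin> \<phi> j ` S"
  shows "S \<subseteq> T j"
proof -
  interpret Bj: ring "B j" using Bring[OF j] .
  have SC: "S \<subseteq> carrier R" and ms: "\<one> \<in> S" "\<And>s t. s \<in> S \<Longrightarrow> t \<in> S \<Longrightarrow> s \<otimes> t \<in> S"
    using D unfolding left_den_def left_ore_def mult_subset_def by auto
  have ore: "\<And>r s. r \<in> carrier R \<Longrightarrow> s \<in> S \<Longrightarrow> \<exists>s'\<in>S. \<exists>r'\<in>carrier R. s' \<otimes> r = r' \<otimes> s"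
    using D unfolding left_den_def left_ore_def by auto
  have den: "\<And>r s. r \<in> carrier R \<Longrightarrow> s \<in> S \<Longrightarrow> r \<otimes> s = \<zero> \<Longrightarrow> \<exists>t\<in>S. t \<otimes> r = \<zero>"
    using D unfolding left_den_def by auto
  obtain e where e: "e \<in> carrier R" "\<And>i. i < n \<Longrightarrow> \<phi> i e = (if i = j then \<one>\<^bsub>B i\<^esub> else \<zero>\<^bsub>B i\<^esub>)"
    using e_ex[OF j] by blast
  have "left_den (B j) (\<phi> j ` S)"
    unfolding left_den_def left_ore_def mult_subset_def
  proof (intro conjI ballI impI)
    show "\<phi> j ` S \<subseteq> carrier (B j)" using SC j by auto
    have "\<phi> j \<one> \<in> \<phi> j ` S" using ms(1) by (rule imageI)
    then show "\<one>\<^bsub>B j\<^esub> \<in> \<phi> j ` S" using ph1[OF j] by simp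
    show "\<zero>\<^bsub>B j\<^esub> \<notin> \<phi> j ` S" by fact
  next
    fix a b assume "a \<in> \<phi> j ` S" "b \<in> \<phi> j ` S"
    then obtain s t where st: "s \<in> S" "t \<in> S" "a = \<phi> j s" "b = \<phi> j t" by auto
    have "s \<in> carrier R" "t \<in> carrier R" using st SC by auto
    then have "a \<otimes>\<^bsub>B j\<^esub> b = \<phi> j (s \<otimes> t)" using st j by simp
    then show "a \<otimes>\<^bsub>B j\<^esub> b \<in> \<phi> j ` S" using ms(2)[OF st(1) st(2)] by blast
  next
    fix b x assume b: "b \<in> carrier (B j)" and x: "x \<in> \<phi> j ` S"
    obtain s where s: "s \<in> S" "x = \<phi> j s" using x by auto
    have "b \<in> \<phi> j ` carrier R" using b phsurj[OF j] by simp
    then obtain r where r: "r \<in> carrier R" "\<phi> j r = b" by blast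
    obtain s' r' where sr: "s' \<in> S" "r' \<in> carrier R" "s' \<otimes> r = r' \<otimes> s" using ore[OF r(1) s(1)] by blast
    have sc: "s \<in> carrier R" "s' \<in> carrier R" using s(1) sr(1) SC by blast+
    have "\<phi> j s' \<otimes>\<^bsub>B j\<^esub> b = \<phi> j (s' \<otimes> r)" using phm[OF j sc(2) r(1)] r(2) by simp
    also have "\<dots> = \<phi> j (r' \<otimes> s)" using sr(3) by simp
    also have "\<dots> = \<phi> j r' \<otimes>\<^bsub>B j\<^esub> x" using phm[OF j sr(2) sc(1)] s(2) by simp
    finally have "\<phi> j s' \<otimes>\<^bsub>B j\<^esub> b = \<phi> j r' \<otimes>\<^bsub>B j\<^esub> x" .
    moreover have "\<phi> j s' \<in> \<phi> j ` S" "\<phi> j r' \<in> carrier (B j)" using sr j by auto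
    ultimately show "\<exists>s'\<in>\<phi> j ` S. \<exists>r'\<in>carrier (B j). s' \<otimes>\<^bsub>B j\<^esub> b = r' \<otimes>\<^bsub>B j\<^esub> x" by blast
  next
    fix b x assume b: "b \<in> carrier (B j)" and x: "x \<in> \<phi> j ` S" and z: "b \<otimes>\<^bsub>B j\<^esub> x = \<zero>\<^bsub>B j\<^esub>"
    obtain s where s: "s \<in> S" "x = \<phi> j s" using x by auto
    have sc: "s \<in> carrier R" using s SC by auto
    have "b \<in> \<phi> j ` carrier R" using b phsurj[OF j] by simp
    then obtain r where r: "r \<in> carrier R" "\<phi> j r = b" by blast
    have "e \<otimes> r \<otimes> s = \<zero>"
    proof (rule jinj)
      show "e \<otimes> r \<otimes> s \<in> carrier R" "\<zero> \<in> carrier R" using e r sc by auto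
      fix i assume i: "i < n"
      have ph3: "\<phi> i (e \<otimes> r \<otimes> s) = (\<phi> i e \<otimes>\<^bsub>B i\<^esub> \<phi> i r) \<otimes>\<^bsub>B i\<^esub> \<phi> i s"
        using phm[OF i m_closed[OF e(1) r(1)] sc] phm[OF i e(1) r(1)] by simp
      show "\<phi> i (e \<otimes> r \<otimes> s) = \<phi> i \<zero>"
      proof (cases "i = j")
        case True
        then have "\<phi> i (e \<otimes> r \<otimes> s) = (\<one>\<^bsub>B j\<^esub> \<otimes>\<^bsub>B j\<^esub> b) \<otimes>\<^bsub>B j\<^esub> x"
          using ph3 e(2)[OF i] r(2) s(2) by simp
        also have "\<dots> = \<zero>\<^bsub>B j\<^esub>" using b z by simp
        finally show ?thesis using True i by simp
      next
        case False
        have c: "\<phi> i r \<in> carrier (B i)" "\<phi> i s \<in> carrier (B i)" using phc[OF i r(1)] phc[OF i sc] .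
        have "\<phi> i (e \<otimes> r \<otimes> s) = (\<zero>\<^bsub>B i\<^esub> \<otimes>\<^bsub>B i\<^esub> \<phi> i r) \<otimes>\<^bsub>B i\<^esub> \<phi> i s"
          using ph3 e(2)[OF i] False by simp
        also have "\<dots> = \<zero>\<^bsub>B i\<^esub>" using Blnull[OF i] c by simp
        finally show ?thesis using i by simp
      qed
    qed
    then have "e \<otimes> r \<otimes> s = \<zero>" .
    moreover have "e \<otimes> r \<in> carrier R" using e(1) r(1) by (rule m_closed)
    ultimately obtain t where t: "t \<in> S" "t \<otimes> (e \<otimes> r) = \<zero>" using den s(1) by blast
    have tc: "t \<in> carrier R" using t SC by auto
    have "\<phi> j t \<otimes>\<^bsub>B j\<^esub> b = \<phi> j (t \<otimes> (e \<otimes> r))" using tc e r j b by simp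
    also have "\<dots> = \<zero>\<^bsub>B j\<^esub>" using t j by simp
    finally show "\<exists>t\<in>\<phi> j ` S. t \<otimes>\<^bsub>B j\<^esub> b = \<zero>\<^bsub>B j\<^esub>" using t by blast
  qed
  then have "\<phi> j ` S \<subseteq> Units (B j)" using llm_units[OF L] by blast
  then show ?thesis unfolding T_def using SC by auto
qed

lemma den_sub:
  assumes L: "\<And>i. i < n \<Longrightarrow> left_loc_maximal (B i)" and D: "left_den R S"
  shows "\<exists>j<n. S \<subseteq> T j"
proof (rule ccontr)
  assume "\<not> (\<exists>j<n. S \<subseteq> T j)"
  note nex = this
  have z: "\<exists>s\<in>S. \<phi> j s = \<zero>\<^bsub>B j\<^esub>" if j: "j < n" for j
  proof (rule ccontr)
    assume "\<not> (\<exists>s\<in>S. \<phi> j s = \<zero>\<^bsub>B j\<^esub>)"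
    then have "\<zero>\<^bsub>B j\<^esub> \<notin> \<phi> j ` S" by (metis (no_types, lifting) imageE)
    then have "S \<subseteq> T j" using den_sub_j[OF j L[OF j] D] by simp
    then show False using nex j by blast
  qed
  have SC: "S \<subseteq> carrier R" and ms: "\<one> \<in> S" "\<zero> \<notin> S" "\<And>s t. s \<in> S \<Longrightarrow> t \<in> S \<Longrightarrow> s \<otimes> t \<in> S"
    using D unfolding left_den_def left_ore_def mult_subset_def by auto
  have "\<exists>s\<in>S. \<forall>i<n. \<phi> i s = \<zero>\<^bsub>B i\<^esub>" using prod_zero[OF z SC ms(1) ms(3)] by blast
  then obtain s where s: "s \<in> S" "\<And>i. i < n \<Longrightarrow> \<phi> i s = \<zero>\<^bsub>B i\<^esub>" by blast
  have sc: "s \<in> carrier R" using s(1) SC by blast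
  have "s = \<zero>" using s(2) by (intro jinj[OF sc]) simp_all
  then show False using s(1) ms(2) by blast
qed

lemma T_unitsub: assumes j: "j < n" "k < n" "j \<noteq> k" and nt: "\<one>\<^bsub>B k\<^esub> \<noteq> \<zero>\<^bsub>B k\<^esub>"
  shows "\<not> T j \<subseteq> T k"
proof
  assume sub: "T j \<subseteq> T k"
  obtain e where e: "e \<in> carrier R" "\<And>i. i < n \<Longrightarrow> \<phi> i e = (if i = j then \<one>\<^bsub>B i\<^esub> else \<zero>\<^bsub>B i\<^esub>)"
    using e_ex[OF j(1)] by blast
  interpret Bj: ring "B j" using Bring[OF j(1)] .
  have "e \<in> T j" unfolding T_def using e j by simp
  then have "e \<in> T k" using sub by auto
  then show False unfolding T_def using e j zero_not_unit[OF Bring[OF j(2)] nt] by auto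
qed

lemma maxDen_eq:
  assumes L: "\<And>i. i < n \<Longrightarrow> left_loc_maximal (B i)"
  shows "maxDen_l R = T ` {..<n}"
proof
  have TD: "T j \<in> Den_l R" if "j < n" for j
    using den_T[OF that llm_nontriv[OF L[OF that]]] unfolding Den_l_def by auto
  show "maxDen_l R \<subseteq> T ` {..<n}"
  proof
    fix S assume S: "S \<in> maxDen_l R"
    then have "left_den R S" unfolding maxDen_l_def Den_l_def by auto
    then obtain j where j: "j < n" "S \<subseteq> T j" using den_sub[OF L] by blast
    then have "T j = S" using S TD[OF j(1)] unfolding maxDen_l_def by auto
    then show "S \<in> T ` {..<n}" using j by auto
  qed
  show "T ` {..<n} \<subseteq> maxDen_l R"
  proof
    fix S assume "S \<in> T ` {..<n}"
    then obtain j where j: "j < n" "S = T j" by auto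
    have "\<forall>U\<in>Den_l R. T j \<subseteq> U \<longrightarrow> U = T j"
    proof (intro ballI impI)
      fix U assume U: "U \<in> Den_l R" "T j \<subseteq> U"
      then obtain k where k: "k < n" "U \<subseteq> T k" using den_sub[OF L] unfolding Den_l_def by blast
      then have "k = j" using T_unitsub[OF j(1) k(1) _ llm_nontriv[OF L[OF k(1)]]] U by blast
      then show "U = T j" using U k by auto
    qed
    then show "S \<in> maxDen_l R" unfolding maxDen_l_def using TD[OF j(1)] j by auto
  qed
qed

lemma conds_T:
  assumes L: "\<And>i. i < n \<Longrightarrow> left_loc_maximal (B i)"
  shows "conds R n T"
  unfolding conds_def
proof (intro conjI allI impI)
  show "inj_on T {..<n}"
  proof (rule inj_onI)
    fix j k assume j: "j \<in> {..<n}" and k: "k \<in> {..<n}" and e: "T j = T k"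
    show "j = k"
    proof (rule ccontr)
      assume "j \<noteq> k"
      then have "\<not> T j \<subseteq> T k" using T_unitsub[of j k] llm_nontriv[OF L[of k]] j k by auto
      then show False using e by auto
    qed
  qed
  show "maxDen_l R = T ` {..<n}" using maxDen_eq[OF L] .
  show "loc_radical R = {\<zero>}"
  proof
    show "loc_radical R \<subseteq> {\<zero>}"
    proof
      fix r assume "r \<in> loc_radical R"
      then have r: "r \<in> carrier R" "\<And>j. j < n \<Longrightarrow> r \<in> ass R (T j)"
        by (auto simp add: loc_radical_def maxDen_eq[OF L])
      have "r = \<zero>" using r ass_T by (intro jinj) auto
      then show "r \<in> {\<zero>}" by simp
    qed
    show "{\<zero>} \<subseteq> loc_radical R"
      using ass_T by (auto simp add: loc_radical_def maxDen_eq[OF L])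
  qed
  fix i j assume i: "i < n" and j: "j < n" and ij: "i \<noteq> j"
  show "ass R (T i) <+>\<^bsub>R\<^esub> ass R (T j) = carrier R"
  proof
    show "ass R (T i) <+>\<^bsub>R\<^esub> ass R (T j) \<subseteq> carrier R"
      unfolding set_add_def' using ass_subset by fastforce
    show "carrier R \<subseteq> ass R (T i) <+>\<^bsub>R\<^esub> ass R (T j)"
    proof
      fix r assume r: "r \<in> carrier R"
      obtain e where e: "e \<in> carrier R" "\<And>k. k < n \<Longrightarrow> \<phi> k e = (if k = i then \<one>\<^bsub>B k\<^esub> else \<zero>\<^bsub>B k\<^esub>)"
        using e_ex[OF i] by blast
      interpret Bi: ring "B i" using Bring[OF i] .
      interpret Bj: ring "B j" using Bring[OF j] .
      define b where "b = e \<otimes> r"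
      define a where "a = r \<oplus> \<ominus> b"
      have bc: "b \<in> carrier R" and ac: "a \<in> carrier R" unfolding a_def b_def using e r by auto
      have "\<phi> j b = \<zero>\<^bsub>B j\<^esub>" unfolding b_def using e r j ij by simp
      then have b: "b \<in> ass R (T j)" using ass_T[OF j] bc by auto
      have "\<phi> i a = \<zero>\<^bsub>B i\<^esub>" unfolding a_def b_def using e r i by (simp add: Bi.r_neg)
      then have a: "a \<in> ass R (T i)" using ass_T[OF i] ac by auto
      have "r = a \<oplus> b" unfolding a_def using r bc by (simp add: a_assoc l_neg)
      then show "r \<in> ass R (T i) <+>\<^bsub>R\<^esub> ass R (T j)" unfolding set_add_def' using a b by blast
    qed
  qed
next
  fix i assume i: "i < n"
  interpret h: ring_hom_ring R "B i" "\<phi> i" using ph[OF i] .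
  have ker: "a_kernel R (B i) (\<phi> i) = ass R (T i)" unfolding a_kernel_def' ass_T[OF i] ..
  have iso: "(\<lambda>U. the_elem (\<phi> i ` U)) \<in> ring_iso (R Quot ass R (T i)) (B i)"
    using h.FactRing_iso_set[OF phsurj[OF i]] unfolding ker .
  have Qr: "ring (R Quot ass R (T i))"
    using ideal.quotient_is_ring[OF h.kernel_is_ideal] unfolding ker .
  show "left_loc_maximal (R Quot ass R (T i))"
    using llm_iso[OF Bring[OF i] Qr ring_iso_set_sym[OF Qr iso] L[OF i]] .
qed

end




context decomp begin

lemma prod_hom: "(\<lambda>r. \<lambda>i\<in>{..<n}. \<phi> i r) \<in> ring_hom R (prod_ring n B)"
proof (rule ring_hom_memI)
  fix x assume x: "x \<in> carrier R"
  then show "(\<lambda>i\<in>{..<n}. \<phi> i x) \<in> carrier (prod_ring n B)" by (auto simp: prod_ring_def)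
  fix y assume y: "y \<in> carrier R"
  show "(\<lambda>i\<in>{..<n}. \<phi> i (x \<otimes> y)) = (\<lambda>i\<in>{..<n}. \<phi> i x) \<otimes>\<^bsub>prod_ring n B\<^esub> (\<lambda>i\<in>{..<n}. \<phi> i y)"
    using x y by (auto simp: prod_ring_def intro!: restrict_ext)
  show "(\<lambda>i\<in>{..<n}. \<phi> i (x \<oplus> y)) = (\<lambda>i\<in>{..<n}. \<phi> i x) \<oplus>\<^bsub>prod_ring n B\<^esub> (\<lambda>i\<in>{..<n}. \<phi> i y)"
    using x y by (auto simp: prod_ring_def intro!: restrict_ext)
next
  show "(\<lambda>i\<in>{..<n}. \<phi> i \<one>) = \<one>\<^bsub>prod_ring n B\<^esub>"
    by (auto simp: prod_ring_def intro!: restrict_ext)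
qed

lemma prod_surj: "f \<in> carrier (prod_ring n B) \<Longrightarrow> \<exists>r\<in>carrier R. (\<lambda>i\<in>{..<n}. \<phi> i r) = f"
proof -
  assume f: "f \<in> carrier (prod_ring n B)"
  then have fP: "f \<in> (\<Pi>\<^sub>E i\<in>{..<n}. carrier (B i))" by (simp add: prod_ring_def)
  have "\<exists>r\<in>carrier R. \<forall>i<n. \<phi> i r = f i"
    by (rule jsurj) (use fP in auto)
  then obtain r where r: "r \<in> carrier R" "\<And>i. i < n \<Longrightarrow> \<phi> i r = f i" by blast
  have "(\<lambda>i\<in>{..<n}. \<phi> i r) = restrict f {..<n}" using r(2) by (intro restrict_ext) auto
  also have "\<dots> = f" using fP by (simp add: PiE_restrict)
  finally show ?thesis using r(1) by blast
qed

lemma prod_iso: "(\<lambda>r. \<lambda>i\<in>{..<n}. \<phi> i r) \<in> ring_iso R (prod_ring n B)"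
  unfolding ring_iso_def
proof (intro CollectI conjI)
  show "(\<lambda>r. \<lambda>i\<in>{..<n}. \<phi> i r) \<in> ring_hom R (prod_ring n B)" by (rule prod_hom)
  show "bij_betw (\<lambda>r. \<lambda>i\<in>{..<n}. \<phi> i r) (carrier R) (carrier (prod_ring n B))"
    unfolding bij_betw_def
  proof
    show "inj_on (\<lambda>r. \<lambda>i\<in>{..<n}. \<phi> i r) (carrier R)"
    proof (rule inj_onI)
      fix x y assume x: "x \<in> carrier R" and y: "y \<in> carrier R"
        and e: "(\<lambda>i\<in>{..<n}. \<phi> i x) = (\<lambda>i\<in>{..<n}. \<phi> i y)"
      show "x = y"
      proof (rule jinj[OF x y])
        fix i assume i: "i < n"
        have "(\<lambda>i\<in>{..<n}. \<phi> i x) i = (\<lambda>i\<in>{..<n}. \<phi> i y) i" using e by simp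
        then show "\<phi> i x = \<phi> i y" using i by simp
      qed
    qed
    show "(\<lambda>r. \<lambda>i\<in>{..<n}. \<phi> i r) ` carrier R = carrier (prod_ring n B)"
    proof
      show "(\<lambda>r. \<lambda>i\<in>{..<n}. \<phi> i r) ` carrier R \<subseteq> carrier (prod_ring n B)"
        using ring_hom_closed[OF prod_hom] by blast
      show "carrier (prod_ring n B) \<subseteq> (\<lambda>r. \<lambda>i\<in>{..<n}. \<phi> i r) ` carrier R"
        using prod_surj by blast
    qed
  qed
qed

lemma img_pred:
  assumes j: "j < n"
  shows "(\<lambda>r. \<lambda>i\<in>{..<n}. \<phi> i r) ` {r \<in> carrier R. P (\<phi> j r)} = {f \<in> carrier (prod_ring n B). P (f j)}"
proof
  show "(\<lambda>r. \<lambda>i\<in>{..<n}. \<phi> i r) ` {r \<in> carrier R. P (\<phi> j r)} \<subseteq> {f \<in> carrier (prod_ring n B). P (f j)}"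
    using ring_hom_closed[OF prod_hom] j by auto
  show "{f \<in> carrier (prod_ring n B). P (f j)} \<subseteq> (\<lambda>r. \<lambda>i\<in>{..<n}. \<phi> i r) ` {r \<in> carrier R. P (\<phi> j r)}"
  proof
    fix f assume f: "f \<in> {f \<in> carrier (prod_ring n B). P (f j)}"
    then obtain r where r: "r \<in> carrier R" "(\<lambda>i\<in>{..<n}. \<phi> i r) = f" using prod_surj by blast
    have "f j = \<phi> j r" using r(2) j by auto
    then show "f \<in> (\<lambda>r. \<lambda>i\<in>{..<n}. \<phi> i r) ` {r \<in> carrier R. P (\<phi> j r)}"
      using f r by auto
  qed
qed

end




lemma den_image_units:
  fixes R (structure)
  assumes R: "ring R" and Bq: "ring Bq" and h: "\<pi> \<in> ring_hom R Bq" and sj: "\<pi> ` carrier R = carrier Bq"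
    and ker: "{r \<in> carrier R. \<pi> r = \<zero>\<^bsub>Bq\<^esub>} = ass R S" and D: "left_den R S" and L: "left_loc_maximal Bq"
  shows "\<pi> ` S \<subseteq> Units Bq"
proof -
  interpret ring R by fact
  interpret h: ring_hom_ring R Bq \<pi>
    using R Bq h unfolding ring_hom_ring_def ring_hom_ring_axioms_def by auto
  have SC: "S \<subseteq> carrier R" and ms: "\<one> \<in> S" "\<zero> \<notin> S" "\<And>s t. s \<in> S \<Longrightarrow> t \<in> S \<Longrightarrow> s \<otimes> t \<in> S"
    using D unfolding left_den_def left_ore_def mult_subset_def by auto
  have ore: "\<And>r s. r \<in> carrier R \<Longrightarrow> s \<in> S \<Longrightarrow> \<exists>s'\<in>S. \<exists>r'\<in>carrier R. s' \<otimes> r = r' \<otimes> s"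
    using D unfolding left_den_def left_ore_def by auto
  have den: "\<And>r s. r \<in> carrier R \<Longrightarrow> s \<in> S \<Longrightarrow> r \<otimes> s = \<zero> \<Longrightarrow> \<exists>t\<in>S. t \<otimes> r = \<zero>"
    using D unfolding left_den_def by auto
  have kerD: "\<exists>t\<in>S. t \<otimes> r = \<zero>" if "r \<in> carrier R" "\<pi> r = \<zero>\<^bsub>Bq\<^esub>" for r
  proof -
    have "r \<in> ass R S" using ker that by blast
    then show ?thesis unfolding ass_def by blast
  qed
  have kerI: "\<pi> r = \<zero>\<^bsub>Bq\<^esub>" if "r \<in> carrier R" "t \<in> S" "t \<otimes> r = \<zero>" for r t
  proof -
    have "r \<in> ass R S" unfolding ass_def using that by blast
    then show ?thesis using ker by blast
  qed
  have "left_den Bq (\<pi> ` S)"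
    unfolding left_den_def left_ore_def mult_subset_def
  proof (intro conjI ballI impI)
    show "\<pi> ` S \<subseteq> carrier Bq" using SC by auto
    have "\<pi> \<one> \<in> \<pi> ` S" using ms(1) by (rule imageI)
    then show "\<one>\<^bsub>Bq\<^esub> \<in> \<pi> ` S" by simp
    show "\<zero>\<^bsub>Bq\<^esub> \<notin> \<pi> ` S"
    proof
      assume "\<zero>\<^bsub>Bq\<^esub> \<in> \<pi> ` S"
      then obtain s where s: "s \<in> S" "\<pi> s = \<zero>\<^bsub>Bq\<^esub>" by auto
      have sc: "s \<in> carrier R" using s(1) SC by blast
      obtain t where t: "t \<in> S" "t \<otimes> s = \<zero>" using kerD[OF sc s(2)] by blast
      have "t \<otimes> s \<in> S" using ms(3)[OF t(1) s(1)] .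
      then show False using t(2) ms(2) by simp
    qed
  next
    fix a b assume "a \<in> \<pi> ` S" "b \<in> \<pi> ` S"
    then obtain s t where st: "s \<in> S" "t \<in> S" "a = \<pi> s" "b = \<pi> t" by auto
    have "s \<in> carrier R" "t \<in> carrier R" using st SC by auto
    then have "a \<otimes>\<^bsub>Bq\<^esub> b = \<pi> (s \<otimes> t)" using st by simp
    then show "a \<otimes>\<^bsub>Bq\<^esub> b \<in> \<pi> ` S" using ms(3)[OF st(1) st(2)] by blast
  next
    fix b x assume b: "b \<in> carrier Bq" and x: "x \<in> \<pi> ` S"
    obtain s where s: "s \<in> S" "x = \<pi> s" using x by auto
    have "b \<in> \<pi> ` carrier R" using b sj by simp
    then obtain r where r: "r \<in> carrier R" "\<pi> r = b" by blast
    obtain s' r' where sr: "s' \<in> S" "r' \<in> carrier R" "s' \<otimes> r = r' \<otimes> s" using ore[OF r(1) s(1)] by blast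
    have sc: "s \<in> carrier R" "s' \<in> carrier R" using s(1) sr(1) SC by blast+
    have "\<pi> s' \<otimes>\<^bsub>Bq\<^esub> b = \<pi> (s' \<otimes> r)" using sc r by simp
    also have "\<dots> = \<pi> (r' \<otimes> s)" using sr(3) by simp
    also have "\<dots> = \<pi> r' \<otimes>\<^bsub>Bq\<^esub> x" using sr(2) sc s(2) by simp
    finally have "\<pi> s' \<otimes>\<^bsub>Bq\<^esub> b = \<pi> r' \<otimes>\<^bsub>Bq\<^esub> x" .
    moreover have "\<pi> s' \<in> \<pi> ` S" "\<pi> r' \<in> carrier Bq" using sr by auto
    ultimately show "\<exists>s'\<in>\<pi> ` S. \<exists>r'\<in>carrier Bq. s' \<otimes>\<^bsub>Bq\<^esub> b = r' \<otimes>\<^bsub>Bq\<^esub> x" by blast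
  next
    fix b x assume b: "b \<in> carrier Bq" and x: "x \<in> \<pi> ` S" and z: "b \<otimes>\<^bsub>Bq\<^esub> x = \<zero>\<^bsub>Bq\<^esub>"
    obtain s where s: "s \<in> S" "x = \<pi> s" using x by auto
    have sc: "s \<in> carrier R" using s SC by auto
    have "b \<in> \<pi> ` carrier R" using b sj by simp
    then obtain r where r: "r \<in> carrier R" "\<pi> r = b" by blast
    have "\<pi> (r \<otimes> s) = \<zero>\<^bsub>Bq\<^esub>" using z r sc s(2) by simp
    then obtain t where t: "t \<in> S" "t \<otimes> (r \<otimes> s) = \<zero>" using kerD[OF m_closed[OF r(1) sc]] by blast
    have tc: "t \<in> carrier R" using t(1) SC by blast
    have "(t \<otimes> r) \<otimes> s = \<zero>" using t(2) tc r(1) sc by (simp add: m_assoc)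
    then obtain t' where t': "t' \<in> S" "t' \<otimes> (t \<otimes> r) = \<zero>" using den[OF m_closed[OF tc r(1)] s(1)] by blast
    have t'c: "t' \<in> carrier R" using t'(1) SC by blast
    have "(t' \<otimes> t) \<otimes> r = \<zero>" using t'(2) t'c tc r(1) by (simp add: m_assoc)
    then have "\<pi> ((t' \<otimes> t) \<otimes> r) = \<zero>\<^bsub>Bq\<^esub>" by simp
    then have "\<pi> (t' \<otimes> t) \<otimes>\<^bsub>Bq\<^esub> b = \<zero>\<^bsub>Bq\<^esub>" using t'c tc r by simp
    moreover have "\<pi> (t' \<otimes> t) \<in> \<pi> ` S" using ms(3)[OF t'(1) t(1)] by (rule imageI)
    ultimately show "\<exists>t\<in>\<pi> ` S. t \<otimes>\<^bsub>Bq\<^esub> b = \<zero>\<^bsub>Bq\<^esub>" by blast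
  qed
  then show ?thesis using llm_units[OF L] by blast
qed

lemma quot_facts:
  fixes R (structure)
  assumes R: "ring R" and I: "ideal I R"
  shows "((+>) I) \<in> ring_hom R (R Quot I)" "((+>) I) ` carrier R = carrier (R Quot I)"
    "{r \<in> carrier R. I +> r = \<zero>\<^bsub>R Quot I\<^esub>} = I" "ring (R Quot I)"
proof -
  interpret ring R by fact
  show "((+>) I) \<in> ring_hom R (R Quot I)" using ideal.rcos_ring_hom[OF I] .
  show "((+>) I) ` carrier R = carrier (R Quot I)"
    by (auto simp add: FactRing_def A_RCOSETS_def')
  show "{r \<in> carrier R. I +> r = \<zero>\<^bsub>R Quot I\<^esub>} = I"
    using ideal.rcos_const_imp_mem[OF I] a_rcos_zero[OF I] ideal.Icarr[OF I]
    unfolding FactRing_def by auto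
  show "ring (R Quot I)" using ideal.quotient_is_ring[OF I] .
qed




lemma part3:
  fixes R :: "('a,'m) ring_scheme" (structure) and n :: nat and S :: "nat \<Rightarrow> 'a set"
    and Q :: "nat \<Rightarrow> ('c,'k) ring_scheme" and \<sigma> :: "nat \<Rightarrow> 'a \<Rightarrow> 'c"
  assumes R: "ring R" and C: "conds R n S" and Lc: "\<forall>i<n. is_left_localization R (S i) (Q i) (\<sigma> i)"
  shows "(\<forall>i<n. left_loc_maximal (Q i)
                 \<and> \<sigma> i ` carrier R = carrier (Q i)
                 \<and> {r \<in> carrier R. \<sigma> i r = \<zero>\<^bsub>Q i\<^esub>} = ass R (S i)
                 \<and> Q i \<simeq> R Quot ass R (S i))
          \<and> (\<lambda>r. \<lambda>i\<in>{..<n}. \<sigma> i r) \<in> ring_iso R (prod_ring n Q)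
          \<and> (\<forall>i<n. (\<lambda>r. \<lambda>j\<in>{..<n}. \<sigma> j r) ` S i
                     = {f \<in> carrier (prod_ring n Q). f i \<in> Units (Q i)}
                 \<and> S i = {r \<in> carrier R. \<sigma> i r \<in> Units (Q i)}
                 \<and> \<sigma> i ` S i = Units (Q i))
          \<and> (\<forall>i<n. (\<lambda>r. \<lambda>j\<in>{..<n}. \<sigma> j r) ` ass R (S i)
                     = {f \<in> carrier (prod_ring n Q). f i = \<zero>\<^bsub>Q i\<^esub>})"
proof -
  interpret ring R by fact
  have Cm: "maxDen_l R = S ` {..<n}" and Crad: "loc_radical R = {\<zero>}"
    and Ccom: "\<And>i j. i < n \<Longrightarrow> j < n \<Longrightarrow> i \<noteq> j \<Longrightarrow> ass R (S i) <+>\<^bsub>R\<^esub> ass R (S j) = carrier R"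
    and Cq: "\<And>i. i < n \<Longrightarrow> left_loc_maximal (R Quot ass R (S i))"
    using C unfolding conds_def by auto
  have Smax: "S i \<in> maxDen_l R" if "i < n" for i using Cm that by auto
  have Sden: "left_den R (S i)" if "i < n" for i using Smax[OF that] unfolding maxDen_l_def Den_l_def by auto
  have SC: "S i \<subseteq> carrier R" if "i < n" for i
    using Sden[OF that] unfolding left_den_def left_ore_def mult_subset_def by auto
  have Qr: "ring (Q i)" and hom: "\<sigma> i \<in> ring_hom R (Q i)" and un: "\<sigma> i ` S i \<subseteq> Units (Q i)"
    and frac: "\<forall>q\<in>carrier (Q i). \<exists>s\<in>S i. \<exists>r\<in>carrier R. q = inv\<^bsub>Q i\<^esub> (\<sigma> i s) \<otimes>\<^bsub>Q i\<^esub> \<sigma> i r"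
    and ker: "{r \<in> carrier R. \<sigma> i r = \<zero>\<^bsub>Q i\<^esub>} = ass R (S i)" if "i < n" for i
    using Lc that unfolding is_left_localization_def by auto
  have hr: "ring_hom_ring R (Q i) (\<sigma> i)" if "i < n" for i
    using R Qr[OF that] hom[OF that] unfolding ring_hom_ring_def ring_hom_ring_axioms_def by auto
  have kerI: "a_kernel R (Q i) (\<sigma> i) = ass R (S i)" if "i < n" for i
    unfolding a_kernel_def' using ker[OF that] .
  have idl: "ideal (ass R (S i)) R" if i: "i < n" for i
    using ring_hom_ring.kernel_is_ideal[OF hr[OF i]] unfolding kerI[OF i] .
  have qr: "ring (R Quot ass R (S i))" if i: "i < n" for i
    using quot_facts(4)[OF R idl[OF i]] .
  have qu: "(+>) (ass R (S i)) ` S i \<subseteq> Units (R Quot ass R (S i))" if i: "i < n" for i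
    using den_image_units[OF R quot_facts(4)[OF R idl[OF i]] quot_facts(1)[OF R idl[OF i]]
        quot_facts(2)[OF R idl[OF i]] quot_facts(3)[OF R idl[OF i]] Sden[OF i] Cq[OF i]] .
  have linv: "\<exists>s'\<in>carrier R. \<sigma> i s' \<otimes>\<^bsub>Q i\<^esub> \<sigma> i s = \<one>\<^bsub>Q i\<^esub>" if i: "i < n" and s: "s \<in> S i" for i s
  proof -
    let ?I = "ass R (S i)"
    interpret h: ring_hom_ring R "Q i" "\<sigma> i" using hr[OF i] .
    have sc: "s \<in> carrier R" using s SC[OF i] by blast
    have "?I +> s \<in> Units (R Quot ?I)" using qu[OF i] s by blast
    then obtain Y where Y: "Y \<in> carrier (R Quot ?I)" "Y \<otimes>\<^bsub>R Quot ?I\<^esub> (?I +> s) = \<one>\<^bsub>R Quot ?I\<^esub>"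
      unfolding Units_def by blast
    define \<psi> where "\<psi> = (\<lambda>U. the_elem (\<sigma> i ` U))"
    have psi: "\<psi> \<in> ring_hom (R Quot ?I) (Q i)" unfolding \<psi>_def using h.the_elem_hom unfolding kerI[OF i] .
    have psis: "\<psi> (?I +> s) = \<sigma> i s" unfolding \<psi>_def using h.the_elem_simp[OF sc] unfolding kerI[OF i] .
    obtain r where r: "r \<in> carrier R" "\<sigma> i ` Y = {\<sigma> i r}"
      using h.the_elem_wf'[of Y] Y(1) unfolding kerI[OF i] by blast
    have psiY: "\<psi> Y = \<sigma> i r" unfolding \<psi>_def using r(2) by simp
    have "?I +> s \<in> carrier (R Quot ?I)" using quot_facts(2)[OF R idl[OF i]] sc by blast
    then have "\<psi> (Y \<otimes>\<^bsub>R Quot ?I\<^esub> (?I +> s)) = \<psi> Y \<otimes>\<^bsub>Q i\<^esub> \<psi> (?I +> s)"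
      using ring_hom_mult[OF psi Y(1)] by blast
    then have "\<sigma> i r \<otimes>\<^bsub>Q i\<^esub> \<sigma> i s = \<one>\<^bsub>Q i\<^esub>" using Y(2) psiY psis ring_hom_one[OF psi] by simp
    then show ?thesis using r(1) by blast
  qed
  have sj: "\<sigma> i ` carrier R = carrier (Q i)" if i: "i < n" for i
  proof
    interpret h: ring_hom_ring R "Q i" "\<sigma> i" using hr[OF i] .
    show "\<sigma> i ` carrier R \<subseteq> carrier (Q i)" by auto
    show "carrier (Q i) \<subseteq> \<sigma> i ` carrier R"
    proof
      fix q assume q: "q \<in> carrier (Q i)"
      then obtain s r where sr: "s \<in> S i" "r \<in> carrier R" "q = inv\<^bsub>Q i\<^esub> (\<sigma> i s) \<otimes>\<^bsub>Q i\<^esub> \<sigma> i r"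
        using frac[OF i] by blast
      have sc: "s \<in> carrier R" using sr(1) SC[OF i] by blast
      obtain s' where s': "s' \<in> carrier R" "\<sigma> i s' \<otimes>\<^bsub>Q i\<^esub> \<sigma> i s = \<one>\<^bsub>Q i\<^esub>" using linv[OF i sr(1)] by blast
      have u: "\<sigma> i s \<in> Units (Q i)" using un[OF i] sr(1) by blast
      have "inv\<^bsub>Q i\<^esub> (\<sigma> i s) = \<one>\<^bsub>Q i\<^esub> \<otimes>\<^bsub>Q i\<^esub> inv\<^bsub>Q i\<^esub> (\<sigma> i s)" using u by simp
      also have "\<dots> = (\<sigma> i s' \<otimes>\<^bsub>Q i\<^esub> \<sigma> i s) \<otimes>\<^bsub>Q i\<^esub> inv\<^bsub>Q i\<^esub> (\<sigma> i s)" using s'(2) by simp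
      also have "\<dots> = \<sigma> i s' \<otimes>\<^bsub>Q i\<^esub> (\<sigma> i s \<otimes>\<^bsub>Q i\<^esub> inv\<^bsub>Q i\<^esub> (\<sigma> i s))"
        using u s'(1) sc by (simp add: h.S.m_assoc)
      also have "\<dots> = \<sigma> i s'" using u s'(1) by simp
      finally have "q = \<sigma> i (s' \<otimes> r)" using sr(3) s'(1) sr(2) by simp
      then show "q \<in> \<sigma> i ` carrier R" using s'(1) sr(2) by blast
    qed
  qed
  have dec: "decomp R n Q \<sigma>"
    unfolding decomp_def decomp_axioms_def
  proof (intro conjI allI impI)
    show "ring R" by fact
    show "\<And>i. i < n \<Longrightarrow> ring (Q i)" using Qr by blast
    show "\<And>i. i < n \<Longrightarrow> \<sigma> i \<in> ring_hom R (Q i)" using hom by blast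
  next
    fix r r' assume r: "r \<in> carrier R" and r': "r' \<in> carrier R" and e0: "\<forall>i. i < n \<longrightarrow> \<sigma> i r = \<sigma> i r'"
    have e: "\<sigma> i r = \<sigma> i r'" if "i < n" for i using e0 that by blast
    define d where "d = r \<oplus> \<ominus> r'"
    have dc: "d \<in> carrier R" unfolding d_def using r r' by simp
    have "d \<in> ass R (S i)" if i: "i < n" for i
    proof -
      interpret h: ring_hom_ring R "Q i" "\<sigma> i" using hr[OF i] .
      have "\<sigma> i d = \<sigma> i r' \<oplus>\<^bsub>Q i\<^esub> \<ominus>\<^bsub>Q i\<^esub> \<sigma> i r'" unfolding d_def using r r' e[OF i] by simp
      also have "\<dots> = \<zero>\<^bsub>Q i\<^esub>" using r' by (simp add: h.S.r_neg)
      finally show ?thesis using ker[OF i] dc by blast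
    qed
    then have "d \<in> loc_radical R" unfolding loc_radical_def Cm using dc by auto
    then have dz: "d = \<zero>" using Crad by simp
    have "r = d \<oplus> r'" unfolding d_def using r r' by (simp add: a_assoc l_neg)
    then show "r = r'" using dz r' by simp
  next
    fix a assume a0: "\<forall>i. i < n \<longrightarrow> a i \<in> carrier (Q i)"
    have a: "a i \<in> carrier (Q i)" if "i < n" for i using a0 that by blast
    have E: "\<exists>e\<in>carrier R. \<sigma> j e = \<one>\<^bsub>Q j\<^esub> \<and> (\<forall>i<m. i \<noteq> j \<longrightarrow> \<sigma> i e = \<zero>\<^bsub>Q i\<^esub>)"
      if j: "j < n" and m: "m \<le> n" for j m
      using m
    proof (induction m)
      case 0
      interpret hj: ring_hom_ring R "Q j" "\<sigma> j" using hr[OF j] .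
      have "\<sigma> j \<one> = \<one>\<^bsub>Q j\<^esub>" by simp
      then show ?case using one_closed by blast
    next
      case (Suc m)
      then have mn: "m < n" "m \<le> n" by auto
      obtain e where e0: "e \<in> carrier R" "\<sigma> j e = \<one>\<^bsub>Q j\<^esub>" "\<forall>i<m. i \<noteq> j \<longrightarrow> \<sigma> i e = \<zero>\<^bsub>Q i\<^esub>"
        using Suc.IH[OF mn(2)] by blast
      have e3: "\<sigma> i e = \<zero>\<^bsub>Q i\<^esub>" if "i < m" "i \<noteq> j" for i using e0(3) that by simp
      note e = e0(1) e0(2) e3
      show ?case
      proof (cases "m = j")
        case True
        have "\<forall>i<Suc m. i \<noteq> j \<longrightarrow> \<sigma> i e = \<zero>\<^bsub>Q i\<^esub>" using e(3) True by (auto simp: less_Suc_eq)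
        then show ?thesis using e(1,2) by blast
      next
        case False
        interpret hj: ring_hom_ring R "Q j" "\<sigma> j" using hr[OF j] .
        interpret hm: ring_hom_ring R "Q m" "\<sigma> m" using hr[OF mn(1)] .
        have "\<one> \<in> ass R (S j) <+>\<^bsub>R\<^esub> ass R (S m)" using Ccom[OF j mn(1)] False by auto
        then obtain x y where xy: "x \<in> ass R (S j)" "y \<in> ass R (S m)" "\<one> = x \<oplus> y"
          unfolding set_add_def' by blast
        have xc: "x \<in> carrier R" and yc: "y \<in> carrier R" using xy(1,2) ass_subset[of R "S j"] ass_subset[of R "S m"] by blast+
        have x0: "\<sigma> j x = \<zero>\<^bsub>Q j\<^esub>" using xy(1) ker[OF j] by blast
        have y0: "\<sigma> m y = \<zero>\<^bsub>Q m\<^esub>" using xy(2) ker[OF mn(1)] by blast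
        have "\<one>\<^bsub>Q j\<^esub> = \<sigma> j \<one>" by simp
        also have "\<dots> = \<sigma> j (x \<oplus> y)" using xy(3) by simp
        also have "\<dots> = \<sigma> j y" using xc yc x0 by simp
        finally have y1: "\<sigma> j y = \<one>\<^bsub>Q j\<^esub>" by simp
        have "\<sigma> j (e \<otimes> y) = \<one>\<^bsub>Q j\<^esub>" using e(1,2) yc y1 by simp
        moreover have "\<sigma> i (e \<otimes> y) = \<zero>\<^bsub>Q i\<^esub>" if i: "i < Suc m" "i \<noteq> j" for i
        proof -
          have iN: "i < n" using i mn by linarith
          interpret hi: ring_hom_ring R "Q i" "\<sigma> i" using hr[OF iN] .
          show ?thesis
          proof (cases "i = m")
            case True then show ?thesis using e(1) yc y0 by simp
          next
            case False then have "i < m" using i by linarith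
            then show ?thesis using e(1) e(3)[of i] i(2) yc by simp
          qed
        qed
        moreover have "e \<otimes> y \<in> carrier R" using e(1) yc by simp
        ultimately show ?thesis by blast
      qed
    qed
    have P: "\<exists>r\<in>carrier R. \<forall>i<m. \<sigma> i r = a i" if m: "m \<le> n" for m
      using m
    proof (induction m)
      case 0 show ?case using one_closed by blast
    next
      case (Suc m)
      then have mn: "m < n" "m \<le> n" by auto
      obtain r where r: "r \<in> carrier R" "\<forall>i<m. \<sigma> i r = a i" using Suc.IH[OF mn(2)] by blast
      note r = r(1) r(2)[rule_format]
      obtain e where e0: "e \<in> carrier R" "\<sigma> m e = \<one>\<^bsub>Q m\<^esub>" "\<forall>i<m. i \<noteq> m \<longrightarrow> \<sigma> i e = \<zero>\<^bsub>Q i\<^esub>"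
        using E[OF mn(1) mn(2)] by blast
      have e3: "\<sigma> i e = \<zero>\<^bsub>Q i\<^esub>" if "i < m" for i using e0(3) that by simp
      note e = e0(1) e0(2) e3
      have "a m \<in> \<sigma> m ` carrier R" unfolding sj[OF mn(1)] by (rule a[OF mn(1)])
      then obtain x where x0: "a m = \<sigma> m x" "x \<in> carrier R" by (rule imageE)
      have x: "x \<in> carrier R" "\<sigma> m x = a m" using x0 by simp_all
      define r' where "r' = r \<oplus> e \<otimes> (x \<oplus> \<ominus> r)"
      have r'c: "r' \<in> carrier R" unfolding r'_def using r(1) e(1) x(1) by simp
      have "\<sigma> i r' = a i" if i: "i < Suc m" for i
      proof -
        have iN: "i < n" using i mn by linarith
        interpret hi: ring_hom_ring R "Q i" "\<sigma> i" using hr[OF iN] .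
        have ex: "\<sigma> i r' = \<sigma> i r \<oplus>\<^bsub>Q i\<^esub> \<sigma> i e \<otimes>\<^bsub>Q i\<^esub> (\<sigma> i x \<oplus>\<^bsub>Q i\<^esub> \<ominus>\<^bsub>Q i\<^esub> \<sigma> i r)"
          unfolding r'_def using r(1) e(1) x(1) by simp
        show ?thesis
        proof (cases "i = m")
          case True
          interpret hm: ring_hom_ring R "Q m" "\<sigma> m" using hr[OF mn(1)] .
          have c: "\<sigma> m r \<in> carrier (Q m)" "a m \<in> carrier (Q m)" using r(1) a[OF mn(1)] by auto
          have "\<sigma> i r' = \<sigma> m r \<oplus>\<^bsub>Q m\<^esub> (a m \<oplus>\<^bsub>Q m\<^esub> \<ominus>\<^bsub>Q m\<^esub> \<sigma> m r)"
            using ex True e(2) x(2) c by simp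
          also have "\<dots> = a m" using c by (simp add: hm.S.a_lcomm hm.S.r_neg)
          finally show ?thesis using True by simp
        next
          case False
          then have im: "i < m" using i by linarith
          have c: "\<sigma> i x \<oplus>\<^bsub>Q i\<^esub> \<ominus>\<^bsub>Q i\<^esub> \<sigma> i r \<in> carrier (Q i)" using x(1) r(1) by simp
          have "\<sigma> i r' = \<sigma> i r" using ex e(3)[OF im] c r(1) by simp
          then show ?thesis using r(2)[OF im] by simp
        qed
      qed
      then show ?case using r'c by blast
    qed
    show "\<exists>r\<in>carrier R. \<forall>i<n. \<sigma> i r = a i" using P[of n] by simp
  qed
  interpret D: decomp R n Q \<sigma> by fact
  have Llm: "left_loc_maximal (Q i)" and Qiso: "Q i \<simeq> R Quot ass R (S i)" if i: "i < n" for i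
  proof -
    interpret h: ring_hom_ring R "Q i" "\<sigma> i" using hr[OF i] .
    have iso: "(\<lambda>U. the_elem (\<sigma> i ` U)) \<in> ring_iso (R Quot ass R (S i)) (Q i)"
      using h.FactRing_iso_set[OF sj[OF i]] unfolding kerI[OF i] .
    show "left_loc_maximal (Q i)" using llm_iso[OF qr[OF i] Qr[OF i] iso Cq[OF i]] .
    have "R Quot ass R (S i) \<simeq> Q i" using iso unfolding is_ring_iso_def by blast
    then show "Q i \<simeq> R Quot ass R (S i)" using ring_iso_sym[OF qr[OF i]] by blast
  qed
  have Seq: "S i = D.T i" if i: "i < n" for i
  proof -
    have "D.T i \<in> Den_l R" using D.den_T[OF i llm_nontriv[OF Llm[OF i]]] unfolding Den_l_def by simp
    moreover have "S i \<subseteq> D.T i" unfolding D.T_def using SC[OF i] un[OF i] by blast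
    ultimately show ?thesis using Smax[OF i] unfolding maxDen_l_def by blast
  qed
  show ?thesis
  proof (intro conjI allI impI)
    fix i assume i: "i < n"
    show "left_loc_maximal (Q i)" using Llm[OF i] .
    show "\<sigma> i ` carrier R = carrier (Q i)" using sj[OF i] .
    show "{r \<in> carrier R. \<sigma> i r = \<zero>\<^bsub>Q i\<^esub>} = ass R (S i)" using ker[OF i] .
    show "Q i \<simeq> R Quot ass R (S i)" using Qiso[OF i] .
  next
    show "(\<lambda>r. \<lambda>i\<in>{..<n}. \<sigma> i r) \<in> ring_iso R (prod_ring n Q)" using D.prod_iso .
  next
    fix i assume i: "i < n"
    show "S i = {r \<in> carrier R. \<sigma> i r \<in> Units (Q i)}" using Seq[OF i] unfolding D.T_def .
    then show "(\<lambda>r. \<lambda>j\<in>{..<n}. \<sigma> j r) ` S i = {f \<in> carrier (prod_ring n Q). f i \<in> Units (Q i)}"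
      using D.img_pred[OF i, of "\<lambda>x. x \<in> Units (Q i)"] by simp
    show "\<sigma> i ` S i = Units (Q i)"
    proof
      show "\<sigma> i ` S i \<subseteq> Units (Q i)" using un[OF i] .
      show "Units (Q i) \<subseteq> \<sigma> i ` S i"
      proof
        fix u assume u: "u \<in> Units (Q i)"
        then have "u \<in> carrier (Q i)" unfolding Units_def by blast
        then have "u \<in> \<sigma> i ` carrier R" using sj[OF i] by simp
        then obtain r where r: "r \<in> carrier R" "\<sigma> i r = u" by blast
        then have "r \<in> S i" using Seq[OF i] u unfolding D.T_def by simp
        then show "u \<in> \<sigma> i ` S i" using r(2) by blast
      qed
    qed
  next
    fix i assume i: "i < n"
    show "(\<lambda>r. \<lambda>j\<in>{..<n}. \<sigma> j r) ` ass R (S i) = {f \<in> carrier (prod_ring n Q). f i = \<zero>\<^bsub>Q i\<^esub>}"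
      using D.img_pred[OF i, of "\<lambda>x. x = \<zero>\<^bsub>Q i\<^esub>"] ker[OF i] by simp
  qed
qed


lemma dir1:
  fixes R :: "('a,'m) ring_scheme" (structure) and A :: "nat \<Rightarrow> 'b ring"
  assumes R: "ring R" and L: "\<forall>i<n. left_loc_maximal (A i)" and iso: "R \<simeq> prod_ring n A"
  shows "\<exists>S. conds R n S"
proof -
  interpret ring R by fact
  obtain h where h: "h \<in> ring_iso R (prod_ring n A)" using iso unfolding is_ring_iso_def by blast
  have hh: "h \<in> ring_hom R (prod_ring n A)" and hb: "bij_betw h (carrier R) (carrier (prod_ring n A))"
    using h unfolding ring_iso_def by auto
  have hc: "h x \<in> (\<Pi>\<^sub>E i\<in>{..<n}. carrier (A i))" if "x \<in> carrier R" for x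
    using ring_hom_closed[OF hh that] by (simp add: prod_ring_def)
  have dec: "decomp R n A (\<lambda>i r. h r i)"
    unfolding decomp_def decomp_axioms_def
  proof (intro conjI allI impI)
    show "ring R" by fact
    fix i assume i: "i < n"
    show "ring (A i)" using L i unfolding left_loc_maximal_def by auto
    show "(\<lambda>r. h r i) \<in> ring_hom R (A i)"
    proof (rule ring_hom_memI)
      fix x assume x: "x \<in> carrier R"
      show "h x i \<in> carrier (A i)" using hc[OF x] i by auto
      fix y assume y: "y \<in> carrier R"
      have "h (x \<otimes> y) = h x \<otimes>\<^bsub>prod_ring n A\<^esub> h y" using ring_hom_mult[OF hh x y] .
      then show "h (x \<otimes> y) i = h x i \<otimes>\<^bsub>A i\<^esub> h y i" using i by (simp add: prod_ring_def)
      have "h (x \<oplus> y) = h x \<oplus>\<^bsub>prod_ring n A\<^esub> h y" using ring_hom_add[OF hh x y] .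
      then show "h (x \<oplus> y) i = h x i \<oplus>\<^bsub>A i\<^esub> h y i" using i by (simp add: prod_ring_def)
    next
      have "h \<one> = \<one>\<^bsub>prod_ring n A\<^esub>" using ring_hom_one[OF hh] .
      then show "h \<one> i = \<one>\<^bsub>A i\<^esub>" using i by (simp add: prod_ring_def)
    qed
  next
    fix a assume a: "\<forall>i. i < n \<longrightarrow> a i \<in> carrier (A i)"
    have "restrict a {..<n} \<in> carrier (prod_ring n A)" using a by (simp add: prod_ring_def)
    then have "restrict a {..<n} \<in> h ` carrier R" using hb unfolding bij_betw_def by simp
    then obtain r where r: "restrict a {..<n} = h r" "r \<in> carrier R" by (rule imageE)
    have "\<forall>i<n. h r i = a i"
    proof (intro allI impI)
      fix i assume "i < n"
      then show "h r i = a i" using fun_cong[OF r(1), of i] by simp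
    qed
    then show "\<exists>r\<in>carrier R. \<forall>i<n. h r i = a i" using r(2) by blast
  next
    fix r r' assume r: "r \<in> carrier R" and r': "r' \<in> carrier R" and e: "\<forall>i. i < n \<longrightarrow> h r i = h r' i"
    have "h r = h r'"
      by (rule PiE_ext[OF hc[OF r] hc[OF r']]) (use e in auto)
    then show "r = r'" using hb r r' unfolding bij_betw_def inj_on_def by blast
  qed
  interpret D: decomp R n A "\<lambda>i r. h r i" by fact
  have "conds R n D.T" using D.conds_T L by blast
  then show ?thesis by blast
qed

lemma dir2:
  fixes R :: "('a,'m) ring_scheme" (structure)
  assumes R: "ring R" and C: "conds R n S"
  shows "\<exists>A :: nat \<Rightarrow> 'a set ring. (\<forall>i<n. left_loc_maximal (A i)) \<and> R \<simeq> prod_ring n A"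
proof -
  interpret ring R by fact
  have Cm: "maxDen_l R = S ` {..<n}"
    and Cq: "\<And>i. i < n \<Longrightarrow> left_loc_maximal (R Quot ass R (S i))"
    using C unfolding conds_def by auto
  have Smax: "S i \<in> maxDen_l R" if "i < n" for i using Cm that by auto
  have Sden: "left_den R (S i)" if "i < n" for i
    using Smax[OF that] unfolding maxDen_l_def Den_l_def by auto
  have idl: "ideal (ass R (S i)) R" if i: "i < n" for i
    using ass_ideal[OF R] Sden[OF i] unfolding left_den_def by blast
  define Q where "Q = (\<lambda>i. R Quot ass R (S i))"
  define \<sigma> where "\<sigma> = (\<lambda>i. (+>) (ass R (S i)))"
  have loc: "\<forall>i<n. is_left_localization R (S i) (Q i) (\<sigma> i)"
  proof (intro allI impI)
    fix i assume i: "i < n"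
    note qf = quot_facts[OF R idl[OF i]]
    have one: "\<one> \<in> S i" using Sden[OF i] unfolding left_den_def left_ore_def mult_subset_def by auto
    interpret Qi: ring "Q i" unfolding Q_def using qf(4) .
    have fr: "\<forall>q\<in>carrier (Q i). \<exists>s\<in>S i. \<exists>r\<in>carrier R. q = inv\<^bsub>Q i\<^esub> (\<sigma> i s) \<otimes>\<^bsub>Q i\<^esub> \<sigma> i r"
    proof
      fix q assume q: "q \<in> carrier (Q i)"
      then have "q \<in> \<sigma> i ` carrier R" unfolding Q_def \<sigma>_def using qf(2) by simp
      then obtain r where r: "q = \<sigma> i r" "r \<in> carrier R" by (rule imageE)
      have s1: "\<sigma> i \<one> = \<one>\<^bsub>Q i\<^esub>" unfolding Q_def \<sigma>_def using ring_hom_one[OF qf(1)] .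
      have rc: "\<sigma> i r \<in> carrier (Q i)" unfolding Q_def \<sigma>_def using ring_hom_closed[OF qf(1) r(2)] .
      have "inv\<^bsub>Q i\<^esub> (\<sigma> i \<one>) \<otimes>\<^bsub>Q i\<^esub> \<sigma> i r = \<sigma> i r" unfolding s1 using rc by simp
      then have "q = inv\<^bsub>Q i\<^esub> (\<sigma> i \<one>) \<otimes>\<^bsub>Q i\<^esub> \<sigma> i r" using r(1) by simp
      then show "\<exists>s\<in>S i. \<exists>r\<in>carrier R. q = inv\<^bsub>Q i\<^esub> (\<sigma> i s) \<otimes>\<^bsub>Q i\<^esub> \<sigma> i r" using one r(2) by blast
    qed
    show "is_left_localization R (S i) (Q i) (\<sigma> i)"
      unfolding is_left_localization_def
    proof (intro conjI)
      show "ring (Q i)" unfolding Q_def using qf(4) .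
      show "\<sigma> i \<in> ring_hom R (Q i)" unfolding Q_def \<sigma>_def using qf(1) .
      show "\<sigma> i ` S i \<subseteq> Units (Q i)" unfolding Q_def \<sigma>_def
        using den_image_units[OF R qf(4) qf(1) qf(2) qf(3) Sden[OF i] Cq[OF i]] .
      show "\<forall>q\<in>carrier (Q i). \<exists>s\<in>S i. \<exists>r\<in>carrier R. q = inv\<^bsub>Q i\<^esub> (\<sigma> i s) \<otimes>\<^bsub>Q i\<^esub> \<sigma> i r" by (rule fr)
      show "{r \<in> carrier R. \<sigma> i r = \<zero>\<^bsub>Q i\<^esub>} = ass R (S i)" unfolding Q_def \<sigma>_def using qf(3) .
    qed
  qed
  have "(\<lambda>r. \<lambda>i\<in>{..<n}. \<sigma> i r) \<in> ring_iso R (prod_ring n Q)"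
    using conjunct1[OF conjunct2[OF part3[OF R C loc]]] .
  then have "R \<simeq> prod_ring n Q" unfolding is_ring_iso_def by blast
  moreover have "\<forall>i<n. left_loc_maximal (Q i)" unfolding Q_def using Cq by blast
  ultimately show ?thesis by (intro exI[of _ Q] conjI)
qed

theorem theorem2p11:
  fixes R :: "('a,'m) ring_scheme" and n :: nat
  assumes "ring R" and "n \<ge> 1"
  shows
    "((\<exists>A :: nat \<Rightarrow> 'b ring. (\<forall>i<n. left_loc_maximal (A i)) \<and> R \<simeq> prod_ring n A)
        \<longrightarrow> (\<exists>S. conds R n S))
     \<and> ((\<exists>S. conds R n S)
        \<longrightarrow> (\<exists>A :: nat \<Rightarrow> 'a set ring. (\<forall>i<n. left_loc_maximal (A i)) \<and> R \<simeq> prod_ring n A))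
     \<and> (\<forall>S (Q :: nat \<Rightarrow> ('c,'k) ring_scheme) (\<sigma> :: nat \<Rightarrow> 'a \<Rightarrow> 'c).
          conds R n S \<and> (\<forall>i<n. is_left_localization R (S i) (Q i) (\<sigma> i)) \<longrightarrow>
          (\<forall>i<n. left_loc_maximal (Q i)
                 \<and> \<sigma> i ` carrier R = carrier (Q i)
                 \<and> {r \<in> carrier R. \<sigma> i r = \<zero>\<^bsub>Q i\<^esub>} = ass R (S i)
                 \<and> Q i \<simeq> R Quot ass R (S i))
          \<and> (\<lambda>r. \<lambda>i\<in>{..<n}. \<sigma> i r) \<in> ring_iso R (prod_ring n Q)
          \<and> (\<forall>i<n. (\<lambda>r. \<lambda>j\<in>{..<n}. \<sigma> j r) ` S i
                     = {f \<in> carrier (prod_ring n Q). f i \<in> Units (Q i)}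
                 \<and> S i = {r \<in> carrier R. \<sigma> i r \<in> Units (Q i)}
                 \<and> \<sigma> i ` S i = Units (Q i))
          \<and> (\<forall>i<n. (\<lambda>r. \<lambda>j\<in>{..<n}. \<sigma> j r) ` ass R (S i)
                     = {f \<in> carrier (prod_ring n Q). f i = \<zero>\<^bsub>Q i\<^esub>}))"
proof -
  have P1: "(\<exists>A :: nat \<Rightarrow> 'b ring. (\<forall>i<n. left_loc_maximal (A i)) \<and> R \<simeq> prod_ring n A)
        \<longrightarrow> (\<exists>S. conds R n S)"
  proof
    assume "\<exists>A :: nat \<Rightarrow> 'b ring. (\<forall>i<n. left_loc_maximal (A i)) \<and> R \<simeq> prod_ring n A"
    then obtain A :: "nat \<Rightarrow> 'b ring" where A: "\<forall>i<n. left_loc_maximal (A i)" "R \<simeq> prod_ring n A" by blast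
    show "\<exists>S. conds R n S" by (rule dir1[OF assms(1) A(1) A(2)])
  qed
  have P2: "(\<exists>S. conds R n S)
        \<longrightarrow> (\<exists>A :: nat \<Rightarrow> 'a set ring. (\<forall>i<n. left_loc_maximal (A i)) \<and> R \<simeq> prod_ring n A)"
  proof
    assume "\<exists>S. conds R n S"
    then obtain S where S: "conds R n S" by blast
    show "\<exists>A :: nat \<Rightarrow> 'a set ring. (\<forall>i<n. left_loc_maximal (A i)) \<and> R \<simeq> prod_ring n A"
      by (rule dir2[OF assms(1) S])
  qed
  have P3: "(\<forall>S (Q :: nat \<Rightarrow> ('c,'k) ring_scheme) (\<sigma> :: nat \<Rightarrow> 'a \<Rightarrow> 'c).
          conds R n S \<and> (\<forall>i<n. is_left_localization R (S i) (Q i) (\<sigma> i)) \<longrightarrow>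
          (\<forall>i<n. left_loc_maximal (Q i)
                 \<and> \<sigma> i ` carrier R = carrier (Q i)
                 \<and> {r \<in> carrier R. \<sigma> i r = \<zero>\<^bsub>Q i\<^esub>} = ass R (S i)
                 \<and> Q i \<simeq> R Quot ass R (S i))
          \<and> (\<lambda>r. \<lambda>i\<in>{..<n}. \<sigma> i r) \<in> ring_iso R (prod_ring n Q)
          \<and> (\<forall>i<n. (\<lambda>r. \<lambda>j\<in>{..<n}. \<sigma> j r) ` S i
                     = {f \<in> carrier (prod_ring n Q). f i \<in> Units (Q i)}
                 \<and> S i = {r \<in> carrier R. \<sigma> i r \<in> Units (Q i)}
                 \<and> \<sigma> i ` S i = Units (Q i))
          \<and> (\<forall>i<n. (\<lambda>r. \<lambda>j\<in>{..<n}. \<sigma> j r) ` ass R (S i)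
                     = {f \<in> carrier (prod_ring n Q). f i = \<zero>\<^bsub>Q i\<^esub>}))"
    by (intro allI impI, elim conjE, rule part3[OF assms(1)], assumption+)
  show ?thesis by (rule conjI[OF P1 conjI[OF P2 P3]])
qed

end
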